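(* Let $a<0$, $c<0$, $a_2>0$, $c_2>0$, $b>0$, $b_2>0$, let $0<|\omega|<\min\left\{1,\frac{-a}{b},\frac{-c}{b},\frac{a_2}{b_2},\frac{c_2}{b_2}\right\}$, and let $F:\mathbb{R}^4\to\mathbb{R}$ be $C^2$ with $F(0)=0$ satisfying conditions (a), (b), (c) of the context. If $((\psi_n,v_n))_n$ is any minimizing sequence for $S(\omega)$ (that is, $(\psi_n,v_n)\in\mathcal M_\omega\setminus\{0\}$ and $J_\omega(\psi_n,v_n)\to S(\omega)$), then $(I_\omega(\psi_n,v_n))_n$ is a bounded sequence. Moreover, there is $L>0$ such that, up to a subsequence, $I_\omega(\psi_n,v_n)\to L$ as $n\to\infty$.
   Context: $X=H^2(\mathbb{R})\times H^2(\mathbb{R})$. For $(\psi,v)\in X$: $I_1(\psi,v)=\int_{\mathbb R}[\psi^2-c(\psi')^2+c_2(\psi'')^2+v^2-a(v')^2+a_2(v'')^2]\,dx$, $I_2(\psi,v)=\int_{\mathbb R}(\psi v+b\psi'v'+b_2\psi''v'')\,dx$, $I_\omega=I_1-2\omega I_2$. $F:\mathbb{R}^4\to\mathbb{R}$ is $C^2$, $F(0)=0$, $G(w)=w\cdot\nabla F(w)$. Conditions: (a) there is $p>0$ with $w\cdot\nabla G(w)\ge(p+2)G(w)$ for all $w\in\mathbb{R}^4$; (b) there exist $0<q_1\le q_2<\infty$, $C>0$ with $|D^2F(w)|\le C(|w|^{q_1}+|w|^{q_2})$; (c) there exist $u,v\in H^2(\mathbb{R})$ with $\int_{\mathbb R}F(u,u',v,v')\,dx>0$.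 $K(\psi,v)=\int F(\psi,\psi',v,v')\,dx$, $N(\psi,v)=\int G(\psi,\psi',v,v')\,dx$, $J_\omega=\tfrac12I_\omega-K$, $P_\omega=I_\omega-N$, $\mathcal M_\omega=\{(\psi,v)\in X:P_\omega(\psi,v)=0\}$, $S(\omega)=\inf\{J_\omega(\psi,v):(\psi,v)\in\mathcal M_\omega\setminus\{0\}\}$. *)

theory Defs
  imports "HOL-Analysis.Analysis"
begin

definition L2 :: "(real \<Rightarrow> real) \<Rightarrow> bool" where
  "L2 u \<longleftrightarrow> u \<in> borel_measurable lborel \<and> integrable lborel (\<lambda>x. (u x)^2)"

definition test_fun :: "(real \<Rightarrow> real) \<Rightarrow> bool" where
  "test_fun \<phi> \<longleftrightarrow> (\<forall>k x. ((deriv ^^ k) \<phi>) differentiable (at x)) \<and> bounded {x. \<phi> x \<noteq> 0}"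

definition weak_deriv_of :: "(real \<Rightarrow> real) \<Rightarrow> (real \<Rightarrow> real) \<Rightarrow> bool" where
  "weak_deriv_of w u \<longleftrightarrow>
     (\<forall>\<phi>. test_fun \<phi> \<longrightarrow>
        (\<integral>x. u x * deriv \<phi> x \<partial>lborel) = - (\<integral>x. w x * \<phi> x \<partial>lborel))"

definition H2 :: "(real \<Rightarrow> real) \<Rightarrow> bool" where
  "H2 u \<longleftrightarrow> L2 u \<and> (\<exists>u1 u2. L2 u1 \<and> L2 u2 \<and> weak_deriv_of u1 u \<and> weak_deriv_of u2 u1)"

text \<open>First and second weak derivatives (determined up to null sets).\<close>
definition wd1 :: "(real \<Rightarrow> real) \<Rightarrow> real \<Rightarrow> real" where
  "wd1 u = (SOME u1. L2 u1 \<and> weak_deriv_of u1 u \<and> (\<exists>u2. L2 u2 \<and> weak_deriv_of u2 u1))"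

definition wd2 :: "(real \<Rightarrow> real) \<Rightarrow> real \<Rightarrow> real" where
  "wd2 u = (SOME u2. L2 u2 \<and> weak_deriv_of u2 (wd1 u))"

definition grad :: "(real^4 \<Rightarrow> real) \<Rightarrow> real^4 \<Rightarrow> real^4" where
  "grad F w = (\<chi> i. frechet_derivative F (at w) (axis i 1))"

definition hess :: "(real^4 \<Rightarrow> real) \<Rightarrow> real^4 \<Rightarrow> real^4^4" where
  "hess F w = (\<chi> i j. frechet_derivative (grad F) (at w) (axis j 1) $ i)"

definition C2_R4 :: "(real^4 \<Rightarrow> real) \<Rightarrow> bool" where
  "C2_R4 F \<longleftrightarrow> (\<forall>w. F differentiable (at w)) \<and> (\<forall>w. grad F differentiable (at w))
                 \<and> continuous_on UNIV (hess F)"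

definition Gfun :: "(real^4 \<Rightarrow> real) \<Rightarrow> real^4 \<Rightarrow> real" where
  "Gfun F w = w \<bullet> grad F w"

definition vec4 :: "real \<Rightarrow> real \<Rightarrow> real \<Rightarrow> real \<Rightarrow> real^4" where
  "vec4 p q r s = vector [p, q, r, s]"

definition I1 :: "real \<Rightarrow> real \<Rightarrow> real \<Rightarrow> real \<Rightarrow> (real \<Rightarrow> real) \<Rightarrow> (real \<Rightarrow> real) \<Rightarrow> real" where
  "I1 a a2 c c2 \<psi> v = (\<integral>x. (\<psi> x)^2 - c * (wd1 \<psi> x)^2 + c2 * (wd2 \<psi> x)^2
                         + (v x)^2 - a * (wd1 v x)^2 + a2 * (wd2 v x)^2 \<partial>lborel)"

definition I2 :: "real \<Rightarrow> real \<Rightarrow> (real \<Rightarrow> real) \<Rightarrow> (real \<Rightarrow> real) \<Rightarrow> real" where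
  "I2 b b2 \<psi> v = (\<integral>x. \<psi> x * v x + b * wd1 \<psi> x * wd1 v x + b2 * wd2 \<psi> x * wd2 v x \<partial>lborel)"

definition Iom :: "real \<Rightarrow> real \<Rightarrow> real \<Rightarrow> real \<Rightarrow> real \<Rightarrow> real \<Rightarrow> real
                   \<Rightarrow> (real \<Rightarrow> real) \<Rightarrow> (real \<Rightarrow> real) \<Rightarrow> real" where
  "Iom a a2 c c2 b b2 \<omega> \<psi> v = I1 a a2 c c2 \<psi> v - 2 * \<omega> * I2 b b2 \<psi> v"

definition Kfun :: "(real^4 \<Rightarrow> real) \<Rightarrow> (real \<Rightarrow> real) \<Rightarrow> (real \<Rightarrow> real) \<Rightarrow> real" where
  "Kfun F \<psi> v = (\<integral>x. F (vec4 (\<psi> x) (wd1 \<psi> x) (v x) (wd1 v x)) \<partial>lborel)"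

definition Nfun :: "(real^4 \<Rightarrow> real) \<Rightarrow> (real \<Rightarrow> real) \<Rightarrow> (real \<Rightarrow> real) \<Rightarrow> real" where
  "Nfun F \<psi> v = (\<integral>x. Gfun F (vec4 (\<psi> x) (wd1 \<psi> x) (v x) (wd1 v x)) \<partial>lborel)"

definition Jom where
  "Jom a a2 c c2 b b2 F \<omega> \<psi> v = Iom a a2 c c2 b b2 \<omega> \<psi> v / 2 - Kfun F \<psi> v"

definition Pom where
  "Pom a a2 c c2 b b2 F \<omega> \<psi> v = Iom a a2 c c2 b b2 \<omega> \<psi> v - Nfun F \<psi> v"

text \<open>Nehari manifold minus zero (zero in X means a.e. zero).\<close>
definition Mnz where
  "Mnz a a2 c c2 b b2 F \<omega> = {(\<psi>, v). H2 \<psi> \<and> H2 v \<and> Pom a a2 c c2 b b2 F \<omega> \<psi> v = 0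
                                \<and> \<not> (AE x in lborel. \<psi> x = 0 \<and> v x = 0)}"

definition Sval where
  "Sval a a2 c c2 b b2 F \<omega> =
     Inf ((\<lambda>(\<psi>, v). Jom a a2 c c2 b b2 F \<omega> \<psi> v) ` Mnz a a2 c c2 b b2 F \<omega>)"

end

theory Submission
  imports Defs "HOL-Computational_Algebra.Polynomial"
begin

fun Cn :: "nat \<Rightarrow> (real \<Rightarrow> real) \<Rightarrow> bool" where
  "Cn 0 f = True"
| "Cn (Suc n) f = (\<exists>f'. (\<forall>x. (f has_real_derivative f' x) (at x)) \<and> Cn n f')"

lemma Cn_mono: "Cn (Suc n) f \<Longrightarrow> Cn n f"
proof (induction n arbitrary: f)
  case 0 then show ?case by simp
next
  case (Suc n)
  then obtain f' where "\<forall>x. (f has_real_derivative f' x) (at x)" "Cn (Suc n) f'" by auto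
  with Suc.IH show ?case by auto
qed

lemma Cn_const: "Cn n (\<lambda>x. c)"
proof (induction n arbitrary: c)
  case 0 then show ?case by simp
next
  case (Suc n) then show ?case by (auto intro!: exI[of _ "\<lambda>x. 0"] derivative_eq_intros)
qed

lemma Cn_add: "Cn n f \<Longrightarrow> Cn n g \<Longrightarrow> Cn n (\<lambda>x. f x + g x)"
proof (induction n arbitrary: f g)
  case 0 then show ?case by simp
next
  case (Suc n)
  then obtain f' g' where "\<forall>x. (f has_real_derivative f' x) (at x)" "Cn n f'"
      "\<forall>x. (g has_real_derivative g' x) (at x)" "Cn n g'" by auto
  with Suc.IH show ?case
    by (auto intro!: exI[of _ "\<lambda>x. f' x + g' x"] derivative_eq_intros)
qed

lemma Cn_mult: "Cn n f \<Longrightarrow> Cn n g \<Longrightarrow> Cn n (\<lambda>x. f x * g x)"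
proof (induction n arbitrary: f g)
  case 0 then show ?case by simp
next
  case (Suc n)
  then obtain f' g' where d: "\<forall>x. (f has_real_derivative f' x) (at x)" "Cn n f'"
      "\<forall>x. (g has_real_derivative g' x) (at x)" "Cn n g'" by auto
  have "Cn n f" "Cn n g" using Suc.prems Cn_mono by auto
  then have "Cn n (\<lambda>x. f' x * g x + f x * g' x)"
    using Suc.IH d Cn_add by auto
  moreover have "\<forall>x. ((\<lambda>x. f x * g x) has_real_derivative (f' x * g x + f x * g' x)) (at x)"
    using d by (auto intro!: derivative_eq_intros)
  ultimately show ?case by auto
qed

lemma Cn_inverse: "Cn n g \<Longrightarrow> (\<And>x. g x \<noteq> 0) \<Longrightarrow> Cn n (\<lambda>x. inverse (g x))"
proof (induction n arbitrary: g)
  case 0 then show ?case by simp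
next
  case (Suc n)
  then obtain g' where d: "\<forall>x. (g has_real_derivative g' x) (at x)" "Cn n g'" by auto
  have "Cn n g" using Suc.prems Cn_mono by auto
  then have i: "Cn n (\<lambda>x. inverse (g x))" using Suc.IH Suc.prems by auto
  have "Cn n (\<lambda>x. ((-1) * g' x) * (inverse (g x) * inverse (g x)))"
    using Cn_mult[OF Cn_mult[OF Cn_const[of n "-1"] d(2)] Cn_mult[OF i i]] .
  moreover have "\<forall>x. ((\<lambda>x. inverse (g x)) has_real_derivative (((-1) * g' x) * (inverse (g x) * inverse (g x)))) (at x)"
    using d Suc.prems by (auto intro!: derivative_eq_intros simp: power2_eq_square)
  ultimately show ?case by auto
qed

lemma Cn_affine: "Cn n f \<Longrightarrow> Cn n (\<lambda>x. f (a * x + b))"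
proof (induction n arbitrary: f)
  case 0 then show ?case by simp
next
  case (Suc n)
  then obtain f' where d: "\<forall>x. (f has_real_derivative f' x) (at x)" "Cn n f'" by auto
  have "Cn n (\<lambda>x. a * f' (a * x + b))" using Cn_mult[OF Cn_const Suc.IH[OF d(2)]] .
  moreover have "\<forall>x. ((\<lambda>x. f (a * x + b)) has_real_derivative (a * f' (a * x + b))) (at x)"
  proof
    fix x
    have l: "((\<lambda>x. a * x + b) has_real_derivative a) (at x)"
      by (auto intro!: derivative_eq_intros)
    have "((\<lambda>x. f (a * x + b)) has_real_derivative (f' (a * x + b) * a)) (at x)"
      using DERIV_chain2[OF d(1)[rule_format, of "a*x+b"] l] .
    then show "((\<lambda>x. f (a * x + b)) has_real_derivative (a * f' (a * x + b))) (at x)"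
      by (simp add: mult.commute)
  qed
  ultimately show ?case by auto
qed

lemma Cn_deriv_funpow:
  "Cn (Suc k) f \<Longrightarrow> (deriv ^^ k) f differentiable (at x)"
proof (induction k arbitrary: f)
  case 0
  then show ?case by (auto simp: real_differentiable_def)
next
  case (Suc k)
  then obtain f' where d: "\<forall>x. (f has_real_derivative f' x) (at x)" "Cn (Suc k) f'" by auto
  have "deriv f = f'" using d(1) DERIV_imp_deriv by blast
  then have "(deriv ^^ Suc k) f = (deriv ^^ k) f'" by (simp add: funpow_Suc_right del: funpow.simps)
  then show ?case using Suc.IH[OF d(2)] by simp
qed

definition smooth :: "(real \<Rightarrow> real) \<Rightarrow> bool" where
  "smooth f \<longleftrightarrow> (\<forall>n. Cn n f)"

lemma smooth_deriv: "smooth f \<Longrightarrow> (deriv ^^ k) f differentiable (at x)"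
  using Cn_deriv_funpow smooth_def by blast

definition hP :: "real poly \<Rightarrow> real \<Rightarrow> real" where
  "hP P t = (if 0 < t then poly P (1/t) * exp (-1/t) else 0)"

definition Qp :: "real poly \<Rightarrow> real poly" where
  "Qp P = [:0,0,1:] * (P - pderiv P)"

lemma poly_exp_at_top: fixes P :: "real poly" shows "((\<lambda>x. poly P x * exp (-x)) \<longlongrightarrow> 0) at_top"
proof -
  have "((\<lambda>x. (\<Sum>i\<le>degree P. coeff P i * (x ^ i / exp x))) \<longlongrightarrow> (\<Sum>i\<le>degree P. coeff P i * 0)) at_top"
    by (intro tendsto_sum tendsto_mult tendsto_const tendsto_power_div_exp_0)
  moreover have "(\<lambda>x. (\<Sum>i\<le>degree P. coeff P i * (x ^ i / exp x))) = (\<lambda>x. poly P x * exp (-x))"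
    by (rule ext) (simp add: poly_altdef sum_distrib_right exp_minus divide_inverse mult.assoc)
  ultimately show ?thesis by simp
qed

lemma poly_exp_at_right: fixes P :: "real poly" shows "((\<lambda>t. poly P (1/t) * exp (-1/t)) \<longlongrightarrow> 0) (at_right 0)"
proof -
  have "((\<lambda>t. poly P (inverse t) * exp (- inverse t)) \<longlongrightarrow> 0) (at_right 0)"
    using filterlim_compose[OF poly_exp_at_top filterlim_inverse_at_top_right] by simp
  then show ?thesis by (simp add: divide_inverse)
qed

lemma hP_deriv: "(hP P has_real_derivative hP (Qp P) t) (at t)"
proof -
  consider "t > 0" | "t < 0" | "t = 0" by linarith
  then show ?thesis
  proof cases
    case 1
    have d: "((\<lambda>s. poly P (1/s) * exp (-1/s)) has_real_derivative
        (poly (pderiv P) (1/t) * (- 1 / t^2) * exp (-1/t) + poly P (1/t) * (exp (-1/t) * (1 / t^2)))) (at t)"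
      using 1 by (auto intro!: derivative_eq_intros simp: power2_eq_square)
    have "poly (pderiv P) (1/t) * (- 1 / t^2) * exp (-1/t) + poly P (1/t) * (exp (-1/t) * (1 / t^2))
          = hP (Qp P) t"
      using 1 by (simp add: hP_def Qp_def algebra_simps power2_eq_square)
    with d have d2: "((\<lambda>s. poly P (1/s) * exp (-1/s)) has_real_derivative hP (Qp P) t) (at t)" by simp
    show ?thesis
      by (rule has_field_derivative_transform_within_open[OF d2, of "{0<..}"]) (use 1 in \<open>auto simp: hP_def\<close>)
  next
    case 2
    have d2: "((\<lambda>s. 0) has_real_derivative hP (Qp P) t) (at t)"
      using 2 by (auto simp: hP_def intro!: derivative_eq_intros)
    show ?thesis
      by (rule has_field_derivative_transform_within_open[OF d2, of "{..<0}"]) (use 2 in \<open>auto simp: hP_def\<close>)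
  next
    case 3
    have r: "((\<lambda>y. (hP P y - hP P 0) / (y - 0)) \<longlongrightarrow> 0) (at_right 0)"
    proof -
      have "((\<lambda>t. poly ([:0,1:] * P) (1/t) * exp (-1/t)) \<longlongrightarrow> 0) (at_right 0)"
        by (rule poly_exp_at_right)
      moreover have "\<forall>\<^sub>F y in at_right 0. poly ([:0,1:] * P) (1/y) * exp (-1/y) = (hP P y - hP P 0) / (y - 0)"
        using eventually_at_right_less[of "0::real"] by eventually_elim (simp add: hP_def field_simps)
      ultimately show ?thesis by (rule Lim_transform_eventually)
    qed
    have l: "((\<lambda>y. (hP P y - hP P 0) / (y - 0)) \<longlongrightarrow> 0) (at_left 0)"
    proof -
      have "((\<lambda>t. 0::real) \<longlongrightarrow> 0) (at_left 0)" by simp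
      moreover have "\<forall>\<^sub>F y in at_left 0. 0 = (hP P y - hP P 0) / (y - 0)"
        using eventually_at_left_real[of "-1" 0] by (simp add: hP_def eventually_mono)
      ultimately show ?thesis by (rule Lim_transform_eventually)
    qed
    have "((\<lambda>y. (hP P y - hP P 0) / (y - 0)) \<longlongrightarrow> 0) (at 0)"
      using filterlim_split_at[OF l r] .
    then show ?thesis using 3 by (simp add: has_field_derivative_iff hP_def)
  qed
qed

lemma Cn_hP: "Cn n (hP P)"
proof (induction n arbitrary: P)
  case 0 then show ?case by simp
next
  case (Suc n) then show ?case using hP_deriv by auto
qed

lemma hP_pos: "t > 0 \<Longrightarrow> hP [:1:] t > 0" and hP_nonneg: "hP [:1:] t \<ge> 0"
  by (auto simp: hP_def)

definition Rs :: "real \<Rightarrow> real" where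
  "Rs t = hP [:1:] t * inverse (hP [:1:] t + hP [:1:] ((-1) * t + 1))"

lemma Rs_den_pos: "hP [:1:] t + hP [:1:] ((-1) * t + 1) > 0"
proof (cases "t > 0")
  case True then show ?thesis using hP_pos[of t] hP_nonneg[of "(-1) * t + 1"] by linarith
next
  case False then show ?thesis using hP_pos[of "(-1) * t + 1"] hP_nonneg[of t] by linarith
qed

lemma smooth_Rs: "smooth Rs"
  unfolding smooth_def Rs_def
proof
  fix n
  show "Cn n (\<lambda>t. hP [:1:] t * inverse (hP [:1:] t + hP [:1:] ((-1) * t + 1)))"
    apply (rule Cn_mult[OF Cn_hP])
    apply (rule Cn_inverse)
     apply (rule Cn_add[OF Cn_hP Cn_affine[OF Cn_hP]])
    using Rs_den_pos by (metis less_irrefl)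
qed

lemma Rs_zero: "t \<le> 0 \<Longrightarrow> Rs t = 0"
  by (simp add: Rs_def hP_def)

lemma Rs_one: "t \<ge> 1 \<Longrightarrow> Rs t = 1"
proof -
  assume "t \<ge> 1"
  then have "hP [:1:] ((-1) * t + 1) = 0" by (simp add: hP_def)
  moreover have "hP [:1:] t > 0" using \<open>t \<ge> 1\<close> hP_pos by simp
  ultimately show ?thesis by (simp add: Rs_def)
qed

lemma Rs_nonneg: "Rs t \<ge> 0"
  using Rs_den_pos[of t] hP_nonneg[of t] by (simp add: Rs_def)

lemma Rs_le1: "Rs t \<le> 1"
proof -
  have "hP [:1:] t \<le> hP [:1:] t + hP [:1:] ((-1) * t + 1)" using hP_nonneg by simp
  then show ?thesis using Rs_den_pos[of t] hP_nonneg[of t]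
    by (simp add: Rs_def divide_inverse[symmetric] divide_le_eq_1)
qed

definition rho :: "real \<Rightarrow> real" where "rho = deriv Rs"

lemma Rs_deriv: "(Rs has_real_derivative rho t) (at t)"
proof -
  have "Rs differentiable (at t)" using smooth_deriv[OF smooth_Rs, of 0] by simp
  then show ?thesis unfolding rho_def using DERIV_deriv_iff_real_differentiable by blast
qed

lemma rho_cont: "isCont rho t"
proof -
  have "rho differentiable (at t)" using smooth_deriv[OF smooth_Rs, of 1] by (simp add: rho_def)
  then show ?thesis by (simp add: differentiable_imp_continuous_within)
qed

lemma rho_cont_on: "continuous_on S rho"
  using rho_cont by (simp add: continuous_at_imp_continuous_on)

lemma rho_zero: "t < 0 \<or> t > 1 \<Longrightarrow> rho t = 0"
proof -
  assume a: "t < 0 \<or> t > 1"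
  have "(Rs has_real_derivative 0) (at t)"
  proof (cases "t < 0")
    case True
    have d: "((\<lambda>s. 0) has_real_derivative 0) (at t)" by simp
    show ?thesis
      by (rule has_field_derivative_transform_within_open[OF d, of "{..<0}"]) (use True Rs_zero in auto)
  next
    case False
    then have "t > 1" using a by auto
    have d: "((\<lambda>s. 1) has_real_derivative 0) (at t)" by simp
    show ?thesis
      by (rule has_field_derivative_transform_within_open[OF d, of "{1<..}"]) (use \<open>t > 1\<close> Rs_one in auto)
  qed
  then show ?thesis using Rs_deriv DERIV_unique by blast
qed

lemma rho_bounded: "\<exists>M>0. \<forall>t. \<bar>rho t\<bar> \<le> M"
proof -
  have "compact (rho ` {0..1})" by (rule compact_continuous_image[OF rho_cont_on]) simp
  then have "bounded (rho ` {0..1})" by (rule compact_imp_bounded)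
  then obtain M where M: "M > 0" "\<And>x. x \<in> rho ` {0..1} \<Longrightarrow> norm x \<le> M"
    unfolding bounded_pos by auto
  have "\<bar>rho t\<bar> \<le> M" for t
  proof (cases "t \<in> {0..1}")
    case True then show ?thesis using M by auto
  next
    case False then show ?thesis using rho_zero[of t] M by auto
  qed
  with M show ?thesis by auto
qed

lemma Cn_scaled: "e > 0 \<Longrightarrow> Cn n (\<lambda>s. Rs ((s - y) / e))"
proof -
  assume "e > 0"
  have "Cn n (\<lambda>s. Rs ((1/e) * s + (- y / e)))" using Cn_affine smooth_Rs smooth_def by blast
  moreover have "(\<lambda>s. Rs ((1/e) * s + (- y / e))) = (\<lambda>s. Rs ((s - y) / e))"
    by (rule ext) (simp add: diff_divide_distrib)
  ultimately show ?thesis by simp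
qed

definition stepf :: "real \<Rightarrow> real \<Rightarrow> real \<Rightarrow> real \<Rightarrow> real \<Rightarrow> real" where
  "stepf e y d x s = Rs ((s - y) / e) - Rs ((s - x) / d)"

lemma stepf_test: "e > 0 \<Longrightarrow> d > 0 \<Longrightarrow> test_fun (stepf e y d x)"
proof -
  assume e: "e > 0" and d: "d > 0"
  have "Cn n (stepf e y d x)" for n
  proof -
    have "Cn n (\<lambda>s. Rs ((s - y) / e) + (-1) * Rs ((s - x) / d))"
      by (intro Cn_add Cn_mult Cn_const Cn_scaled e d)
    then show ?thesis by (simp add: stepf_def[abs_def])
  qed
  then have "smooth (stepf e y d x)" by (simp add: smooth_def)
  moreover have "{s. stepf e y d x s \<noteq> 0} \<subseteq> {min y x .. max (y + e) (x + d)}"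
  proof
    fix s assume "s \<in> {s. stepf e y d x s \<noteq> 0}"
    then have ne: "Rs ((s - y) / e) \<noteq> Rs ((s - x) / d)" by (simp add: stepf_def)
    show "s \<in> {min y x .. max (y + e) (x + d)}"
    proof (rule ccontr)
      assume "s \<notin> {min y x .. max (y + e) (x + d)}"
      then consider "s < y \<and> s < x" | "s > y + e \<and> s > x + d"
        by (auto simp add: not_le min_def max_def split: if_splits)
      then show False
      proof cases
        case 1
        then have "(s - y) / e \<le> 0" "(s - x) / d \<le> 0" using e d by (auto simp: divide_nonpos_pos)
        then show False using ne Rs_zero by simp
      next
        case 2
        then have "(s - y) / e \<ge> 1" "(s - x) / d \<ge> 1" using e d by (auto simp: field_simps)
        then show False using ne Rs_one by simp
      qed
    qed
  qed
  then have "bounded {s. stepf e y d x s \<noteq> 0}" by (rule bounded_subset[OF bounded_closed_interval])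
  ultimately show ?thesis unfolding test_fun_def using smooth_deriv by blast
qed

lemma stepf_deriv: "e > 0 \<Longrightarrow> d > 0 \<Longrightarrow>
   (stepf e y d x has_real_derivative (rho ((s - y) / e) / e - rho ((s - x) / d) / d)) (at s)"
  unfolding stepf_def
  by (auto intro!: derivative_eq_intros DERIV_chain2[OF Rs_deriv] simp: field_simps)

lemma deriv_stepf: "e > 0 \<Longrightarrow> d > 0 \<Longrightarrow>
   deriv (stepf e y d x) s = rho ((s - y) / e) / e - rho ((s - x) / d) / d"
  using stepf_deriv DERIV_imp_deriv by blast

lemma stepf_bound: "\<bar>stepf e y d x s\<bar> \<le> 1"
  using Rs_nonneg Rs_le1 unfolding stepf_def abs_le_iff
  by (smt (verit, best))


lemma FL_K:
  fixes g :: "real \<Rightarrow> real"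
  assumes gi: "integrable lborel g"
    and g0: "\<And>x. (\<integral>s. g s * indicator {x<..} s \<partial>lborel) = 0"
  shows "AE s in lborel. g s = 0"
proof -
  have [measurable]: "g \<in> borel_measurable lborel" using gi by auto
  define gp where "gp = (\<lambda>s. max (g s) 0)"
  define gm where "gm = (\<lambda>s. max (- g s) 0)"
  have gpi: "integrable lborel gp" unfolding gp_def using gi by (intro integrable_max) auto
  have gmi: "integrable lborel gm" unfolding gm_def using gi by (intro integrable_max) auto
  have [measurable]: "gp \<in> borel_measurable lborel" "gm \<in> borel_measurable lborel"
    using gpi gmi by auto
  have gpm: "g s = gp s - gm s" for s by (simp add: gp_def gm_def max_def)
  have em: "emeasure (density lborel (\<lambda>s. ennreal (h s))) {x<..} = ennreal (\<integral>s. h s * indicator {x<..} s \<partial>lborel)"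
    if hi: "integrable lborel h" and hn: "\<And>s. h s \<ge> 0" for h :: "real \<Rightarrow> real" and x :: real
  proof -
    have [measurable]: "h \<in> borel_measurable lborel" using hi by auto
    have "emeasure (density lborel (\<lambda>s. ennreal (h s))) {x<..} = (\<integral>\<^sup>+ s. ennreal (h s) * indicator {x<..} s \<partial>lborel)"
      by (rule emeasure_density) (auto simp: borel_open)
    also have "\<dots> = (\<integral>\<^sup>+ s. ennreal (h s * indicator {x<..} s) \<partial>lborel)"
      by (rule nn_integral_cong) (auto split: split_indicator)
    also have "\<dots> = ennreal (\<integral>s. h s * indicator {x<..} s \<partial>lborel)"
      by (rule nn_integral_eq_integral) (use hi hn in \<open>auto intro!: integrable_real_mult_indicator simp: borel_open\<close>)
    finally show ?thesis .
  qed
  have eqI: "(\<integral>s. gp s * indicator {x<..} s \<partial>lborel) = (\<integral>s. gm s * indicator {x<..} s \<partial>lborel)" for x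
  proof -
    have "(\<integral>s. g s * indicator {x<..} s \<partial>lborel) = (\<integral>s. gp s * indicator {x<..} s - gm s * indicator {x<..} s \<partial>lborel)"
      by (simp add: gpm algebra_simps)
    also have "\<dots> = (\<integral>s. gp s * indicator {x<..} s \<partial>lborel) - (\<integral>s. gm s * indicator {x<..} s \<partial>lborel)"
      using gpi gmi by (intro Bochner_Integration.integral_diff integrable_real_mult_indicator) (auto simp: borel_open)
    finally show ?thesis using g0[of x] by simp
  qed
  have "density lborel (\<lambda>s. ennreal (gp s)) = density lborel (\<lambda>s. ennreal (gm s))"
  proof (rule measure_eqI_lessThan)
    show "sets (density lborel (\<lambda>s. ennreal (gp s))) = sets borel" by simp
    show "sets (density lborel (\<lambda>s. ennreal (gm s))) = sets borel" by simp
    fix x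
    show "emeasure (density lborel (\<lambda>s. ennreal (gp s))) {x<..} < \<infinity>"
      using em[OF gpi, of x] by (simp add: gp_def)
    show "emeasure (density lborel (\<lambda>s. ennreal (gp s))) {x<..} = emeasure (density lborel (\<lambda>s. ennreal (gm s))) {x<..}"
      using em[OF gpi, of x] em[OF gmi, of x] eqI[of x] by (simp add: gp_def gm_def)
  qed
  then have "AE s in lborel. ennreal (gp s) = ennreal (gm s)"
    by (subst (asm) sigma_finite_measure.density_unique_iff[OF lborel.sigma_finite_measure_axioms]) auto
  then show ?thesis
    by eventually_elim (simp add: gp_def gm_def max_def split: if_splits)
qed

lemma FL:
  fixes f :: "real \<Rightarrow> real"
  assumes fi: "\<And>a b. integrable lborel (\<lambda>s. f s * indicator {a..b} s)"
    and f0: "\<And>a b. a \<le> b \<Longrightarrow> (\<integral>s. f s * indicator {a..b} s \<partial>lborel) = 0"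
  shows "AE s in lborel. f s = 0"
proof -
  have gK: "AE s in lborel. f s * indicator {- real K..real K} s = 0" for K :: nat
  proof (rule FL_K)
    show "integrable lborel (\<lambda>s. f s * indicator {- real K..real K} s)" by (rule fi)
    fix x :: real
    show "(\<integral>s. f s * indicator {- real K..real K} s * indicator {x<..} s \<partial>lborel) = 0"
    proof (cases "x < real K")
      case False
      then have "f s * indicator {- real K..real K} s * indicator {x<..} s = 0" for s
        by (auto split: split_indicator)
      then have "(\<lambda>s. f s * indicator {- real K..real K} s * indicator {x<..} s) = (\<lambda>s. 0)" by (rule ext)
      then show ?thesis by simp
    next
      case True
      define c where "c = max x (- real K)"
      have "(\<integral>s. f s * indicator {- real K..real K} s * indicator {x<..} s \<partial>lborel) = (\<integral>s. f s * indicator {c..real K} s \<partial>lborel)"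
      proof (rule integral_cong_AE)
        show "(\<lambda>s. f s * indicator {- real K..real K} s * indicator {x<..} s) \<in> borel_measurable lborel"
          using fi[of "- real K" "real K"] by (auto intro!: borel_measurable_times simp: borel_open)
        show "(\<lambda>s. f s * indicator {c..real K} s) \<in> borel_measurable lborel"
          using fi[of c "real K"] by auto
        show "AE s in lborel. f s * indicator {- real K..real K} s * indicator {x<..} s = f s * indicator {c..real K} s"
          using AE_lborel_singleton[of c] by eventually_elim (auto simp: c_def split: split_indicator)
      qed
      also have "\<dots> = 0" using True by (intro f0) (auto simp: c_def)
      finally show ?thesis .
    qed
  qed
  then have "AE s in lborel. \<forall>K::nat. f s * indicator {- real K..real K} s = 0"
    using gK by (subst AE_all_countable) auto
  then show ?thesis
  proof eventually_elim
    case (elim s)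
    obtain K :: nat where "\<bar>s\<bar> \<le> real K" using real_arch_simple by blast
    then have "s \<in> {- real K..real K}" by auto
    then show ?case using elim[rule_format, of K] by simp
  qed
qed


lemma rho_meas[measurable]: "rho \<in> borel_measurable borel"
  using rho_cont_on[of UNIV] by (rule borel_measurable_continuous_onI)

lemma Rs_meas[measurable]: "Rs \<in> borel_measurable borel"
proof -
  have "continuous_on UNIV Rs"
    using Rs_deriv by (meson DERIV_isCont continuous_at_imp_continuous_on)
  then show ?thesis by (rule borel_measurable_continuous_onI)
qed

definition Mrho :: real where "Mrho = (SOME M. M > 0 \<and> (\<forall>t. \<bar>rho t\<bar> \<le> M))"

lemma Mrho: "Mrho > 0" "\<bar>rho t\<bar> \<le> Mrho"
  using someI_ex[OF rho_bounded] unfolding Mrho_def by auto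

lemma L2_meas: "L2 f \<Longrightarrow> f \<in> borel_measurable lborel"
  by (simp add: L2_def)

lemma L2_sq: "L2 f \<Longrightarrow> integrable lborel (\<lambda>x. (f x)^2)"
  by (simp add: L2_def)

lemma integrable_ind_Icc: "integrable lborel (indicator {a..b} :: real \<Rightarrow> real)"
  by (simp add: integrable_indicator_iff emeasure_lborel_Icc_eq)

lemma int_L2_bdd:
  assumes "L2 f" "g \<in> borel_measurable lborel" "M \<ge> 0" "\<And>s. \<bar>g s\<bar> \<le> M * indicator {a..b} s"
  shows "integrable lborel (\<lambda>s. f s * g s)"
proof (rule Bochner_Integration.integrable_bound)
  show "integrable lborel (\<lambda>s. M * (f s)^2 + M * indicator {a..b} s)"
    using assms(1) by (intro Bochner_Integration.integrable_add Bochner_Integration.integrable_mult_right L2_sq integrable_ind_Icc)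
  show "(\<lambda>s. f s * g s) \<in> borel_measurable lborel"
    using assms(1,2) L2_meas by measurable
  show "AE x in lborel. norm (f x * g x) \<le> norm (M * (f x)\<^sup>2 + M * indicator {a..b} x)"
  proof (rule AE_I2)
    fix x
    have "\<bar>f x * g x\<bar> \<le> \<bar>f x\<bar> * (M * indicator {a..b} x)"
      using assms(4)[of x] by (simp add: abs_mult mult_left_mono)
    also have "\<dots> \<le> M * (f x)\<^sup>2 + M * indicator {a..b} x"
    proof (cases "x \<in> {a..b}")
      case True
      have "0 \<le> (\<bar>f x\<bar> - 1)^2" by simp
      then have "2 * \<bar>f x\<bar> \<le> \<bar>f x\<bar> * \<bar>f x\<bar> + 1" by (simp add: power2_eq_square algebra_simps)
      then have "\<bar>f x\<bar> \<le> (f x)^2 + 1" by (simp add: power2_eq_square)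
      then have "\<bar>f x\<bar> * M \<le> ((f x)^2 + 1) * M" using assms(3) by (rule mult_right_mono)
      then show ?thesis using True by (simp add: algebra_simps)
    next
      case False then show ?thesis using assms(3) by simp
    qed
    finally show "norm (f x * g x) \<le> norm (M * (f x)\<^sup>2 + M * indicator {a..b} x)" by simp
  qed
qed

lemma int_L2_mult: "L2 f \<Longrightarrow> L2 g \<Longrightarrow> integrable lborel (\<lambda>s. f s * g s)"
proof (rule Bochner_Integration.integrable_bound)
  assume f: "L2 f" and g: "L2 g"
  show "integrable lborel (\<lambda>s. (f s)^2 + (g s)^2)"
    using f g by (intro Bochner_Integration.integrable_add L2_sq)
  show "(\<lambda>s. f s * g s) \<in> borel_measurable lborel"
    using f g L2_meas by measurable
  show "AE x in lborel. norm (f x * g x) \<le> norm ((f x)^2 + (g x)^2)"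
  proof (rule AE_I2)
    fix x
    have "2 * \<bar>f x * g x\<bar> \<le> (f x)^2 + (g x)^2"
      using sum_squares_bound[of "\<bar>f x\<bar>" "\<bar>g x\<bar>"] by (simp add: abs_mult power2_eq_square)
    then show "norm (f x * g x) \<le> norm ((f x)^2 + (g x)^2)" by simp
  qed
qed

lemma int_abs_ind: "L2 f \<Longrightarrow> integrable lborel (\<lambda>s. \<bar>f s\<bar> * indicator {a..b} s)"
proof -
  assume f: "L2 f"
  have "integrable lborel (\<lambda>s. f s * indicator {a..b} s)"
    by (rule int_L2_bdd[OF f, of _ 1]) auto
  then have "integrable lborel (\<lambda>s. \<bar>f s * indicator {a..b} s\<bar>)" by (rule integrable_abs)
  then show ?thesis by (simp add: abs_mult)
qed

lemma integral_ind_Icc: "a \<le> b \<Longrightarrow> (\<integral>s. indicator {a..b} s \<partial>lborel) = b - (a::real)"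
  by simp

lemma amgm_int:
  assumes f: "L2 f" and t: "t > 0" and ab: "a \<le> b"
  shows "(\<integral>s. \<bar>f s\<bar> * indicator {a..b} s \<partial>lborel) \<le> ((b - a) * t + (\<integral>s. (f s)^2 \<partial>lborel) / t) / 2"
proof -
  have "(\<integral>s. \<bar>f s\<bar> * indicator {a..b} s \<partial>lborel) \<le> (\<integral>s. (t * indicator {a..b} s + (f s)^2 / t) / 2 \<partial>lborel)"
  proof (rule integral_mono)
    show "integrable lborel (\<lambda>s. \<bar>f s\<bar> * indicator {a..b} s)" using int_abs_ind[OF f] .
    show "integrable lborel (\<lambda>s. (t * indicator {a..b} s + (f s)^2 / t) / 2)"
      using f by (intro Bochner_Integration.integrable_divide Bochner_Integration.integrable_add Bochner_Integration.integrable_mult_right integrable_ind_Icc L2_sq) 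
    fix s
    show "\<bar>f s\<bar> * indicator {a..b} s \<le> (t * indicator {a..b} s + (f s)^2 / t) / 2"
    proof (cases "s \<in> {a..b}")
      case True
      have "0 \<le> (t - \<bar>f s\<bar>)^2" by simp
      then have "2 * t * \<bar>f s\<bar> \<le> t * t + (f s)^2" by (simp add: power2_eq_square algebra_simps)
      then have "\<bar>f s\<bar> \<le> (t + (f s)^2 / t) / 2" using t by (simp add: field_simps)
      then show ?thesis using True by simp
    next
      case False then show ?thesis using t by simp
    qed
  qed
  also have "\<dots> = ((b - a) * t + (\<integral>s. (f s)^2 \<partial>lborel) / t) / 2"
    using f ab by (simp add: L2_sq integrable_ind_Icc algebra_simps)
  finally show ?thesis .
qed

definition moll :: "(real \<Rightarrow> real) \<Rightarrow> real \<Rightarrow> real \<Rightarrow> real" where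
  "moll u e y = (\<integral>s. u s * (rho ((s - y) / e) / e) \<partial>lborel)"

lemma rho_sc_bound: "e > 0 \<Longrightarrow> \<bar>rho ((s - y) / e) / e\<bar> \<le> (Mrho / e) * indicator {y..y+e} s"
proof -
  assume e: "e > 0"
  show ?thesis
  proof (cases "s \<in> {y..y+e}")
    case True
    then show ?thesis using Mrho(2)[of "(s - y) / e"] e by (simp add: divide_right_mono)
  next
    case False
    then have "(s - y) / e < 0 \<or> (s - y) / e > 1" using e by (auto simp: field_simps)
    then show ?thesis using rho_zero False by simp
  qed
qed

lemma int_moll: "L2 u \<Longrightarrow> e > 0 \<Longrightarrow> integrable lborel (\<lambda>s. u s * (rho ((s - y) / e) / e))"
  by (rule int_L2_bdd[of u _ "Mrho / e" y "y + e"]) (use rho_sc_bound Mrho(1) in \<open>auto\<close>)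

lemma stepf_meas[measurable]: "stepf e y d x \<in> borel_measurable lborel"
  unfolding stepf_def[abs_def] by measurable

lemma stepf_supp: "e > 0 \<Longrightarrow> d > 0 \<Longrightarrow> \<bar>stepf e y d x s\<bar> \<le> 1 * indicator {min y x .. max (y + e) (x + d)} s"
proof (cases "s \<in> {min y x .. max (y + e) (x + d)}")
  case True then show ?thesis using stepf_bound by simp
next
  assume e: "e > 0" and d: "d > 0"
  case False
  then consider "s < y \<and> s < x" | "s > y + e \<and> s > x + d"
    by (auto simp add: not_le min_def max_def split: if_splits)
  then have "stepf e y d x s = 0"
  proof cases
    case 1
    then have "(s - y) / e \<le> 0" "(s - x) / d \<le> 0" using e d by (auto simp: divide_nonpos_pos)
    then show ?thesis using Rs_zero by (simp add: stepf_def)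
  next
    case 2
    then have "(s - y) / e \<ge> 1" "(s - x) / d \<ge> 1" using e d by (auto simp: field_simps)
    then show ?thesis using Rs_one by (simp add: stepf_def)
  qed
  then show ?thesis by simp
qed

lemma int_stepf: "L2 f \<Longrightarrow> e > 0 \<Longrightarrow> d > 0 \<Longrightarrow> integrable lborel (\<lambda>s. f s * stepf e y d x s)"
  by (rule int_L2_bdd[of f _ 1 "min y x" "max (y + e) (x + d)"]) (use stepf_supp in auto)

lemma weak_step:
  assumes u: "L2 u" and u1: "L2 u1" and wd: "weak_deriv_of u1 u" and e: "e > 0" and d: "d > 0"
  shows "moll u e y - moll u d x = - (\<integral>s. u1 s * stepf e y d x s \<partial>lborel)"
proof -
  have "(\<integral>s. u s * deriv (stepf e y d x) s \<partial>lborel) = - (\<integral>s. u1 s * stepf e y d x s \<partial>lborel)"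
    using wd stepf_test[OF e d] unfolding weak_deriv_of_def by blast
  moreover have "(\<integral>s. u s * deriv (stepf e y d x) s \<partial>lborel) =
     (\<integral>s. u s * (rho ((s - y) / e) / e) - u s * (rho ((s - x) / d) / d) \<partial>lborel)"
    by (simp only: deriv_stepf[OF e d] right_diff_distrib)
  moreover have "\<dots> = moll u e y - moll u d x"
    unfolding moll_def using int_moll[OF u e] int_moll[OF u d] by (rule Bochner_Integration.integral_diff)
  ultimately show ?thesis by simp
qed

lemma stepf_small: "0 < e \<Longrightarrow> e \<le> 1 \<Longrightarrow> \<bar>stepf e y 1 y s\<bar> \<le> 1 * indicator {y..y+1} s"
proof (cases "s \<in> {y..y+1}")
  case True then show ?thesis using stepf_bound by simp
next
  assume e: "0 < e" "e \<le> 1"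
  case False
  then consider "s < y" | "s > y + 1" by auto
  then have "stepf e y 1 y s = 0"
  proof cases
    case 1
    then have "(s - y) / e \<le> 0" "(s - y) / 1 \<le> 0" using e by (auto simp: divide_nonpos_pos)
    then show ?thesis using Rs_zero by (simp add: stepf_def)
  next
    case 2
    then have "(s - y) / 1 \<ge> 1" by simp
    moreover have "(s - y) / e \<ge> (s - y) / 1" using 2 e by (intro divide_left_mono) auto
    ultimately show ?thesis using Rs_one by (simp add: stepf_def)
  qed
  then show ?thesis by simp
qed

lemma moll_bound:
  assumes u: "L2 u" and u1: "L2 u1" and wd: "weak_deriv_of u1 u" and e: "0 < e" "e \<le> 1"
  shows "\<bar>moll u e y\<bar> \<le> Mrho * (\<integral>s. \<bar>u s\<bar> * indicator {y..y+1} s \<partial>lborel)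
                        + (\<integral>s. \<bar>u1 s\<bar> * indicator {y..y+1} s \<partial>lborel)"
proof -
  have eq: "moll u e y = moll u 1 y - (\<integral>s. u1 s * stepf e y 1 y s \<partial>lborel)"
    using weak_step[OF u u1 wd e(1), of 1 y y] by simp
  have b1: "\<bar>moll u 1 y\<bar> \<le> (\<integral>s. Mrho * (\<bar>u s\<bar> * indicator {y..y+1} s) \<partial>lborel)"
    unfolding moll_def
  proof (rule integral_abs_bound_integral)
    show "integrable lborel (\<lambda>s. u s * (rho ((s - y) / 1) / 1))" using int_moll[OF u, of 1] by simp
    show "integrable lborel (\<lambda>s. Mrho * (\<bar>u s\<bar> * indicator {y..y + 1} s))"
      using int_abs_ind[OF u] by (rule Bochner_Integration.integrable_mult_right)
    fix s
    have "\<bar>rho ((s - y) / 1) / 1\<bar> \<le> (Mrho / 1) * indicator {y..y+1} s" by (rule rho_sc_bound) simp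
    then have "\<bar>u s\<bar> * \<bar>rho ((s - y) / 1) / 1\<bar> \<le> \<bar>u s\<bar> * ((Mrho / 1) * indicator {y..y+1} s)"
      by (rule mult_left_mono) simp
    then show "\<bar>u s * (rho ((s - y) / 1) / 1)\<bar> \<le> Mrho * (\<bar>u s\<bar> * indicator {y..y + 1} s)"
      by (simp add: abs_mult algebra_simps)
  qed
  have b2: "\<bar>\<integral>s. u1 s * stepf e y 1 y s \<partial>lborel\<bar> \<le> (\<integral>s. \<bar>u1 s\<bar> * indicator {y..y+1} s \<partial>lborel)"
  proof (rule integral_abs_bound_integral)
    show "integrable lborel (\<lambda>s. u1 s * stepf e y 1 y s)" using int_stepf[OF u1 e(1)] by simp
    show "integrable lborel (\<lambda>s. \<bar>u1 s\<bar> * indicator {y..y+1} s)" using int_abs_ind[OF u1] .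
    fix s
    show "\<bar>u1 s * stepf e y 1 y s\<bar> \<le> \<bar>u1 s\<bar> * indicator {y..y + 1} s"
      using stepf_small[OF e, of y s] by (simp add: abs_mult mult_left_mono)
  qed
  show ?thesis using eq b1 b2 by simp
qed

lemma moll_unif:
  assumes u: "L2 u" and u1: "L2 u1" and wd: "weak_deriv_of u1 u" and e: "0 < e" "e \<le> 1" and t: "t > 0"
  shows "\<bar>moll u e y\<bar> \<le> Mrho * ((t + (\<integral>s. (u s)^2 \<partial>lborel) / t) / 2) + (t + (\<integral>s. (u1 s)^2 \<partial>lborel) / t) / 2"
proof -
  have A: "(\<integral>s. \<bar>u s\<bar> * indicator {y..y+1} s \<partial>lborel) \<le> (((y+1) - y) * t + (\<integral>s. (u s)^2 \<partial>lborel) / t) / 2"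
    by (rule amgm_int[OF u t]) simp
  have B: "(\<integral>s. \<bar>u1 s\<bar> * indicator {y..y+1} s \<partial>lborel) \<le> (t + (\<integral>s. (u1 s)^2 \<partial>lborel) / t) / 2"
    using amgm_int[OF u1 t, of y "y+1"] by simp
  have A2: "Mrho * (\<integral>s. \<bar>u s\<bar> * indicator {y..y+1} s \<partial>lborel) \<le> Mrho * ((t + (\<integral>s. (u s)^2 \<partial>lborel) / t) / 2)"
    using A Mrho(1) by (intro mult_left_mono) auto
  show ?thesis using moll_bound[OF u u1 wd e, of y] A2 B by linarith
qed

definition en :: "nat \<Rightarrow> real" where "en n = 1 / real (Suc n)"

lemma en_pos: "en n > 0" and en_le1: "en n \<le> 1"
  by (auto simp: en_def)

lemma Rs_lim: "(\<lambda>n. Rs ((s - y) / en n)) \<longlonglongrightarrow> indicator {y<..} s"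
proof (cases "s > y")
  case True
  obtain N :: nat where N: "1 / (s - y) < real N" using reals_Archimedean2 by blast
  have "eventually (\<lambda>n. Rs ((s - y) / en n) = 1) sequentially"
    unfolding eventually_sequentially
  proof (intro exI allI impI)
    fix n assume "N \<le> n"
    then have "1 / (s - y) < real (Suc n)" using N by linarith
    then have "1 \<le> (s - y) * real (Suc n)" using True by (simp add: field_simps)
    then show "Rs ((s - y) / en n) = 1" using Rs_one by (simp add: en_def)
  qed
  then show ?thesis using True by (simp add: tendsto_eventually)
next
  case False
  then have "Rs ((s - y) / en n) = 0" for n using en_pos[of n] by (intro Rs_zero) (simp add: divide_nonpos_pos)
  then show ?thesis using False by simp
qed

lemma stepf_lim: "(\<lambda>n. stepf (en n) y (en n) x s) \<longlonglongrightarrow> indicator {y<..} s - indicator {x<..} s"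
  unfolding stepf_def by (intro tendsto_diff Rs_lim)

lemma moll_diff_lim:
  assumes u: "L2 u" and u1: "L2 u1" and wd: "weak_deriv_of u1 u"
  shows "(\<lambda>n. moll u (en n) y - moll u (en n) x) \<longlonglongrightarrow>
           - (\<integral>s. u1 s * (indicator {y<..} s - indicator {x<..} s) \<partial>lborel)"
proof -
  have eq: "moll u (en n) y - moll u (en n) x = - (\<integral>s. u1 s * stepf (en n) y (en n) x s \<partial>lborel)" for n
    using weak_step[OF u u1 wd en_pos en_pos] .
  have "(\<lambda>n. (\<integral>s. u1 s * stepf (en n) y (en n) x s \<partial>lborel)) \<longlonglongrightarrow>
           (\<integral>s. u1 s * (indicator {y<..} s - indicator {x<..} s) \<partial>lborel)"
  proof (rule integral_dominated_convergence)
    show "(\<lambda>s. u1 s * (indicator {y<..} s - indicator {x<..} s)) \<in> borel_measurable lborel"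
      using L2_meas[OF u1] by measurable
    show "\<And>i. (\<lambda>s. u1 s * stepf (en i) y (en i) x s) \<in> borel_measurable lborel"
      using L2_meas[OF u1] by measurable
    show "integrable lborel (\<lambda>s. \<bar>u1 s\<bar> * indicator {min y x .. max y x + 1} s)"
      using int_abs_ind[OF u1] .
    show "AE s in lborel. (\<lambda>i. u1 s * stepf (en i) y (en i) x s) \<longlonglongrightarrow> u1 s * (indicator {y<..} s - indicator {x<..} s)"
      by (intro AE_I2 tendsto_mult tendsto_const stepf_lim)
    fix i
    show "AE s in lborel. norm (u1 s * stepf (en i) y (en i) x s) \<le> \<bar>u1 s\<bar> * indicator {min y x .. max y x + 1} s"
    proof (rule AE_I2)
      fix s
      have "\<bar>stepf (en i) y (en i) x s\<bar> \<le> 1 * indicator {min y x .. max (y + en i) (x + en i)} s"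
        using stepf_supp[OF en_pos en_pos] .
      also have "\<dots> \<le> indicator {min y x .. max y x + 1} s"
        using en_le1[of i] by (auto split: split_indicator)
      finally show "norm (u1 s * stepf (en i) y (en i) x s) \<le> \<bar>u1 s\<bar> * indicator {min y x .. max y x + 1} s"
        by (simp add: abs_mult mult_left_mono)
    qed
  qed
  then show ?thesis unfolding eq by (rule tendsto_minus)
qed

lemma Rs_cont: "continuous_on S Rs"
  using Rs_deriv by (meson DERIV_isCont continuous_at_imp_continuous_on)

definition Qs :: "real \<Rightarrow> real" where "Qs t = integral {-1..t} Rs"

lemma Qs_zero: "t \<le> 0 \<Longrightarrow> Qs t = 0"
proof -
  assume t: "t \<le> 0"
  have "integral {-1..t} Rs = integral {-1..t} (\<lambda>_. 0::real)"
    by (rule integral_cong) (use t Rs_zero in auto)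
  then show ?thesis by (simp add: Qs_def)
qed

lemma Qs_deriv: "(Qs has_real_derivative Rs t) (at t)"
proof (cases "t < 0")
  case True
  have d: "((\<lambda>s. 0) has_real_derivative Rs t) (at t)" using True Rs_zero by simp
  show ?thesis
    by (rule has_field_derivative_transform_within_open[OF d, of "{..<0}"]) (use True Qs_zero in auto)
next
  case False
  have "((\<lambda>u. integral {-1..u} Rs) has_vector_derivative Rs t) (at t within {-1..t+1})"
    by (rule integral_has_vector_derivative[OF Rs_cont]) (use False in auto)
  moreover have "at t within {-1..t+1} = at t" by (rule at_within_Icc_at) (use False in auto)
  ultimately show ?thesis
    by (simp add: has_real_derivative_iff_has_vector_derivative Qs_def[abs_def])
qed

lemma Cn_Qs: "Cn n Qs"
proof (cases n)
  case 0 then show ?thesis by simp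
next
  case (Suc m)
  then show ?thesis using Qs_deriv smooth_Rs smooth_def by auto
qed

lemma Qs_diff: "s \<ge> 0 \<Longrightarrow> Qs s - Qs (s - 1) = integral {s-1..s} Rs"
proof -
  assume s: "s \<ge> 0"
  have "integral {-1..s-1} Rs + integral {s-1..s} Rs = integral {-1..s} Rs"
    by (rule Henstock_Kurzweil_Integration.integral_combine) (use s in \<open>auto intro: integrable_continuous_real Rs_cont\<close>)
  then show ?thesis by (simp add: Qs_def)
qed

lemma Qdiff_bound: "\<bar>Qs s - Qs (s - 1)\<bar> \<le> 1"
proof (cases "s \<ge> 0")
  case True
  have i: "Rs integrable_on {s-1..s}" by (intro integrable_continuous_real Rs_cont)
  have "integral {s-1..s} Rs \<ge> 0"
    by (rule integral_nonneg[OF i]) (use Rs_nonneg in auto)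
  moreover have "integral {s-1..s} Rs \<le> integral {s-1..s} (\<lambda>_. 1::real)"
    by (rule integral_le[OF i]) (use Rs_le1 in auto)
  ultimately show ?thesis using Qs_diff[OF True] by simp
next
  case False then show ?thesis using Qs_zero by simp
qed

lemma Qdiff_one: "s \<ge> 2 \<Longrightarrow> Qs s - Qs (s - 1) = 1"
proof -
  assume s: "s \<ge> 2"
  have "integral {s-1..s} Rs = integral {s-1..s} (\<lambda>_. 1::real)"
    by (rule integral_cong) (use s Rs_one in auto)
  then show ?thesis using Qs_diff[of s] s by simp
qed

definition Phi :: "real \<Rightarrow> real \<Rightarrow> real" where
  "Phi e s = Rs ((s - 0) / e) - (Qs s - Qs (1 * s + (-1)))"

lemma Phi_alt: "Phi e s = Rs (s / e) - (Qs s - Qs (s - 1))"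
  by (simp add: Phi_def)

lemma Phi_supp: "0 < e \<Longrightarrow> e \<le> 1 \<Longrightarrow> \<bar>Phi e s\<bar> \<le> 2 * indicator {0..2} s"
proof (cases "s \<in> {0..2}")
  case True
  then show ?thesis using Qdiff_bound[of s] Rs_nonneg[of "s/e"] Rs_le1[of "s/e"] by (simp add: Phi_alt)
next
  assume e: "0 < e" "e \<le> 1"
  case False
  then consider "s < 0" | "s > 2" by auto
  then have "Phi e s = 0"
  proof cases
    case 1
    then show ?thesis using Rs_zero[of "s/e"] Qs_zero[of s] Qs_zero[of "s-1"] e
      by (simp add: Phi_alt divide_nonpos_pos)
  next
    case 2
    have "s / e \<ge> s / 1" using 2 e by (intro divide_left_mono) auto
    then show ?thesis using Rs_one[of "s/e"] Qdiff_one[of s] 2 by (simp add: Phi_alt)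
  qed
  then show ?thesis by simp
qed

lemma Phi_test: "0 < e \<Longrightarrow> e \<le> 1 \<Longrightarrow> test_fun (Phi e)"
proof -
  assume e: "0 < e" "e \<le> 1"
  have eqf: "Phi e = (\<lambda>s. Rs ((s - 0) / e) + (-1) * (Qs s + (-1) * Qs (1 * s + (-1))))"
    by (rule ext) (simp add: Phi_def)
  have "Cn n (Phi e)" for n
    unfolding eqf by (intro Cn_add Cn_mult Cn_const Cn_scaled e Cn_Qs Cn_affine)
  then have "smooth (Phi e)" by (simp add: smooth_def)
  moreover have "{s. Phi e s \<noteq> 0} \<subseteq> {0..2}"
  proof
    fix s assume s: "s \<in> {s. Phi e s \<noteq> 0}"
    show "s \<in> {0..2}"
    proof (rule ccontr)
      assume "s \<notin> {0..2}"
      then have "\<bar>Phi e s\<bar> \<le> 0" using Phi_supp[OF e, of s] by simp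
      then show False using s by simp
    qed
  qed
  then have "bounded {s. Phi e s \<noteq> 0}" by (rule bounded_subset[OF bounded_closed_interval])
  ultimately show ?thesis unfolding test_fun_def using smooth_deriv by blast
qed

lemma Rs_sc_deriv: "e \<noteq> 0 \<Longrightarrow> ((\<lambda>z. Rs (z / e)) has_real_derivative rho (s / e) / e) (at s)"
proof -
  assume e: "e \<noteq> 0"
  have l: "((\<lambda>z. z / e) has_real_derivative 1 / e) (at s)" using e by (auto intro!: derivative_eq_intros)
  from DERIV_chain2[OF Rs_deriv l] show ?thesis using e by simp
qed

lemma Qs_sh_deriv: "((\<lambda>z. Qs (z - 1)) has_real_derivative Rs (s - 1)) (at s)"
proof -
  have l: "((\<lambda>z. z - 1) has_real_derivative 1) (at s)" by (auto intro!: derivative_eq_intros)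
  from DERIV_chain2[OF Qs_deriv l] show ?thesis by simp
qed

lemma deriv_Phi: "0 < e \<Longrightarrow> deriv (Phi e) s = rho (s / e) / e - (Rs s - Rs (s - 1))"
proof -
  assume e: "0 < e"
  have "(Phi e has_real_derivative (rho (s / e) / e - (Rs s - Rs (s - 1)))) (at s)"
    unfolding Phi_alt[abs_def]
    using e by (intro DERIV_diff Rs_sc_deriv Qs_deriv Qs_sh_deriv) auto
  then show ?thesis by (rule DERIV_imp_deriv)
qed

lemma Phi_meas[measurable]: "Phi e \<in> borel_measurable lborel"
proof -
  have "continuous_on UNIV Qs" using Qs_deriv by (meson DERIV_isCont continuous_at_imp_continuous_on)
  then have [measurable]: "Qs \<in> borel_measurable borel" by (rule borel_measurable_continuous_onI)
  show ?thesis unfolding Phi_alt[abs_def] by measurable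
qed

lemma Phi_lim: "(\<lambda>n. Phi (en n) s) \<longlonglongrightarrow> indicator {0<..} s - (Qs s - Qs (s - 1))"
  unfolding Phi_alt using Rs_lim[of s 0] by (intro tendsto_diff tendsto_const) simp

lemma stepf_R1: "stepf 1 0 1 1 s = Rs s - Rs (s - 1)"
  by (simp add: stepf_def)

lemma moll0_lim:
  assumes u: "L2 u" and u1: "L2 u1" and wd: "weak_deriv_of u1 u"
  shows "(\<lambda>n. moll u (en n) 0) \<longlonglongrightarrow>
     (\<integral>s. u s * stepf 1 0 1 1 s \<partial>lborel) - (\<integral>s. u1 s * (indicator {0<..} s - (Qs s - Qs (s - 1))) \<partial>lborel)"
proof -
  have eq: "moll u e 0 = (\<integral>s. u s * stepf 1 0 1 1 s \<partial>lborel) - (\<integral>s. u1 s * Phi e s \<partial>lborel)"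
    if e: "0 < e" "e \<le> 1" for e
  proof -
    have "(\<integral>s. u s * deriv (Phi e) s \<partial>lborel) = - (\<integral>s. u1 s * Phi e s \<partial>lborel)"
      using wd Phi_test[OF e] unfolding weak_deriv_of_def by blast
    moreover have "(\<integral>s. u s * deriv (Phi e) s \<partial>lborel) =
       (\<integral>s. u s * (rho ((s - 0) / e) / e) - u s * stepf 1 0 1 1 s \<partial>lborel)"
      by (simp only: deriv_Phi[OF e(1)] stepf_R1 right_diff_distrib diff_zero)
    moreover have "\<dots> = moll u e 0 - (\<integral>s. u s * stepf 1 0 1 1 s \<partial>lborel)"
      unfolding moll_def using int_moll[OF u e(1), of 0] int_stepf[OF u, of 1 1 0 1]
      by (intro Bochner_Integration.integral_diff) auto
    ultimately show ?thesis by simp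
  qed
  have "(\<lambda>n. (\<integral>s. u1 s * Phi (en n) s \<partial>lborel)) \<longlonglongrightarrow>
           (\<integral>s. u1 s * (indicator {0<..} s - (Qs s - Qs (s - 1))) \<partial>lborel)"
  proof (rule integral_dominated_convergence)
    have "continuous_on UNIV Qs" using Qs_deriv by (meson DERIV_isCont continuous_at_imp_continuous_on)
    then have [measurable]: "Qs \<in> borel_measurable borel" by (rule borel_measurable_continuous_onI)
    show "(\<lambda>s. u1 s * (indicator {0<..} s - (Qs s - Qs (s - 1)))) \<in> borel_measurable lborel"
      using L2_meas[OF u1] by measurable
    show "\<And>i. (\<lambda>s. u1 s * Phi (en i) s) \<in> borel_measurable lborel"
      using L2_meas[OF u1] by measurable
    show "integrable lborel (\<lambda>s. 2 * (\<bar>u1 s\<bar> * indicator {0..2} s))"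
      using int_abs_ind[OF u1] by (rule Bochner_Integration.integrable_mult_right)
    show "AE s in lborel. (\<lambda>i. u1 s * Phi (en i) s) \<longlonglongrightarrow> u1 s * (indicator {0<..} s - (Qs s - Qs (s - 1)))"
      by (intro AE_I2 tendsto_mult tendsto_const Phi_lim)
    fix i
    show "AE s in lborel. norm (u1 s * Phi (en i) s) \<le> 2 * (\<bar>u1 s\<bar> * indicator {0..2} s)"
    proof (rule AE_I2)
      fix s
      have "\<bar>u1 s\<bar> * \<bar>Phi (en i) s\<bar> \<le> \<bar>u1 s\<bar> * (2 * indicator {0..2} s)"
        using Phi_supp[OF en_pos en_le1] by (rule mult_left_mono) simp
      then show "norm (u1 s * Phi (en i) s) \<le> 2 * (\<bar>u1 s\<bar> * indicator {0..2} s)"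
        by (simp add: abs_mult algebra_simps)
    qed
  qed
  then have "(\<lambda>n. (\<integral>s. u s * stepf 1 0 1 1 s \<partial>lborel) - (\<integral>s. u1 s * Phi (en n) s \<partial>lborel)) \<longlonglongrightarrow>
     (\<integral>s. u s * stepf 1 0 1 1 s \<partial>lborel) - (\<integral>s. u1 s * (indicator {0<..} s - (Qs s - Qs (s - 1))) \<partial>lborel)"
    by (intro tendsto_diff tendsto_const)
  then show ?thesis using eq[OF en_pos en_le1] by simp
qed

lemma moll_conv:
  assumes u: "L2 u" and u1: "L2 u1" and wd: "weak_deriv_of u1 u"
  shows "convergent (\<lambda>n. moll u (en n) y)"
proof -
  have "(\<lambda>n. moll u (en n) 0 + (moll u (en n) y - moll u (en n) 0)) \<longlonglongrightarrow>
     ((\<integral>s. u s * stepf 1 0 1 1 s \<partial>lborel) - (\<integral>s. u1 s * (indicator {0<..} s - (Qs s - Qs (s - 1))) \<partial>lborel))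
     + (- (\<integral>s. u1 s * (indicator {y<..} s - indicator {0<..} s) \<partial>lborel))"
    by (intro tendsto_add moll0_lim moll_diff_lim u u1 wd)
  then show ?thesis by (auto simp: convergent_def)
qed

lemma moll_prod_meas:
  assumes u: "L2 u"
  shows "(\<lambda>(y, s). u s * (rho ((s - y) / e) / e)) \<in> borel_measurable (lborel \<Otimes>\<^sub>M lborel)"
proof -
  have [measurable]: "u \<in> borel_measurable lborel" using L2_meas[OF u] .
  show ?thesis by measurable
qed

lemma moll_meas: "L2 u \<Longrightarrow> moll u e \<in> borel_measurable lborel"
  unfolding moll_def[abs_def]
  by (rule lborel.borel_measurable_lebesgue_integral) (use moll_prod_meas in \<open>simp add: case_prod_beta'\<close>)

lemma FTC_rho:
  assumes e: "e > 0" and ab: "a \<le> b"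
  shows "(\<integral>y. rho ((s - y) / e) / e * indicator {a..b} y \<partial>lborel) = stepf e a e b s"
proof -
  have "(\<integral>y. indicator {a..b} y *\<^sub>R (rho ((s - y) / e) / e) \<partial>lborel) = (- Rs ((s - b) / e)) - (- Rs ((s - a) / e))"
  proof (rule integral_FTC_atLeastAtMost[OF ab])
    fix y
    have l: "((\<lambda>y. (s - y) / e) has_real_derivative (- 1 / e)) (at y)" using e by (auto intro!: derivative_eq_intros)
    have "((\<lambda>y. - Rs ((s - y) / e)) has_real_derivative - (rho ((s - y) / e) * (- 1 / e))) (at y)"
      by (intro DERIV_minus DERIV_chain2[OF Rs_deriv l])
    then have "((\<lambda>y. - Rs ((s - y) / e)) has_real_derivative (rho ((s - y) / e) / e)) (at y)" by simp
    then show "((\<lambda>y. - Rs ((s - y) / e)) has_vector_derivative (rho ((s - y) / e) / e)) (at y within {a..b})"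
      by (simp add: has_real_derivative_iff_has_vector_derivative has_vector_derivative_at_within)
  next
    show "continuous_on {a..b} (\<lambda>y. rho ((s - y) / e) / e)"
      by (intro continuous_intros continuous_on_compose2[OF rho_cont_on[of UNIV]]) (use e in auto)
  qed
  then show ?thesis by (simp add: stepf_def mult.commute)
qed

lemma moll_int_Icc:
  assumes u: "L2 u" and e: "e > 0" and ab: "a \<le> b"
  shows "(\<integral>y. moll u e y * indicator {a..b} y \<partial>lborel) = (\<integral>s. u s * stepf e a e b s \<partial>lborel)"
proof -
  have [measurable]: "u \<in> borel_measurable lborel" using L2_meas[OF u] .
  define f where "f = (\<lambda>y s. u s * (rho ((s - y) / e) / e) * indicator {a..b} y)"
  have fm[measurable]: "case_prod f \<in> borel_measurable (lborel \<Otimes>\<^sub>M lborel)"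
    unfolding f_def by measurable
  define c where "c = (Mrho / e) * ((e * 1 + (\<integral>s. (u s)^2 \<partial>lborel) / 1) / 2)"
  have int: "integrable (lborel \<Otimes>\<^sub>M lborel) (case_prod f)"
  proof (rule lborel_pair.Fubini_integrable)
    show "case_prod f \<in> borel_measurable (lborel \<Otimes>\<^sub>M lborel)" by (rule fm)
    show "integrable lborel (\<lambda>y. \<integral>s. norm (case_prod f (y, s)) \<partial>lborel)"
    proof (rule Bochner_Integration.integrable_bound)
      show "integrable lborel (\<lambda>y. c * indicator {a..b} y)"
        using integrable_ind_Icc by (rule Bochner_Integration.integrable_mult_right)
      show "(\<lambda>y. \<integral>s. norm (case_prod f (y, s)) \<partial>lborel) \<in> borel_measurable lborel"
        by measurable
      show "AE y in lborel. norm (\<integral>s. norm (case_prod f (y, s)) \<partial>lborel) \<le> norm (c * indicator {a..b} y)"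
      proof (rule AE_I2)
        fix y
        have eqA: "(\<integral>s. norm (case_prod f (y, s)) \<partial>lborel) = (\<integral>s. \<bar>u s * (rho ((s - y) / e) / e)\<bar> \<partial>lborel) * indicator {a..b} y"
          by (simp add: f_def abs_mult)
        have "(\<integral>s. \<bar>u s * (rho ((s - y) / e) / e)\<bar> \<partial>lborel) \<le> (\<integral>s. (Mrho / e) * (\<bar>u s\<bar> * indicator {y..y+e} s) \<partial>lborel)"
        proof (rule integral_mono)
          show "integrable lborel (\<lambda>s. \<bar>u s * (rho ((s - y) / e) / e)\<bar>)" using int_moll[OF u e] by (rule integrable_abs)
          show "integrable lborel (\<lambda>s. (Mrho / e) * (\<bar>u s\<bar> * indicator {y..y+e} s))"
            using int_abs_ind[OF u] by (rule Bochner_Integration.integrable_mult_right)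
          fix s
          have "\<bar>u s\<bar> * \<bar>rho ((s - y) / e) / e\<bar> \<le> \<bar>u s\<bar> * ((Mrho / e) * indicator {y..y+e} s)"
            using rho_sc_bound[OF e] by (rule mult_left_mono) simp
          then show "\<bar>u s * (rho ((s - y) / e) / e)\<bar> \<le> (Mrho / e) * (\<bar>u s\<bar> * indicator {y..y+e} s)"
            by (simp add: abs_mult algebra_simps)
        qed
        also have "(\<integral>s. (Mrho / e) * (\<bar>u s\<bar> * indicator {y..y+e} s) \<partial>lborel) \<le> c"
        proof -
          have "(\<integral>s. \<bar>u s\<bar> * indicator {y..y+e} s \<partial>lborel) \<le> (((y + e) - y) * 1 + (\<integral>s. (u s)^2 \<partial>lborel) / 1) / 2"
            by (rule amgm_int[OF u]) (use e in auto)
          then have "(Mrho / e) * (\<integral>s. \<bar>u s\<bar> * indicator {y..y+e} s \<partial>lborel) \<le> (Mrho / e) * ((((y + e) - y) * 1 + (\<integral>s. (u s)^2 \<partial>lborel) / 1) / 2)"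
            by (rule mult_left_mono) (use Mrho(1) e in auto)
          then show ?thesis unfolding c_def by simp
        qed
        finally have *: "(\<integral>s. \<bar>u s * (rho ((s - y) / e) / e)\<bar> \<partial>lborel) \<le> c" .
        show "norm (\<integral>s. norm (case_prod f (y, s)) \<partial>lborel) \<le> norm (c * indicator {a..b} y)"
        proof -
          have "(\<integral>s. norm (case_prod f (y, s)) \<partial>lborel) \<ge> 0" by (rule integral_nonneg_AE) simp
          moreover have "c \<ge> 0" unfolding c_def using Mrho(1) e by (auto intro!: mult_nonneg_nonneg divide_nonneg_nonneg add_nonneg_nonneg integral_nonneg_AE)
          ultimately show ?thesis
            using * eqA by (auto split: split_indicator)
        qed
      qed
    qed
    show "AE y in lborel. integrable lborel (\<lambda>s. case_prod f (y, s))"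
    proof (rule AE_I2)
      fix y
      show "integrable lborel (\<lambda>s. case_prod f (y, s))"
        using Bochner_Integration.integrable_mult_left[OF int_moll[OF u e, of y], of "indicator {a..b} y"]
        by (simp add: f_def)
    qed
  qed
  have "(\<integral>s. (\<integral>y. f y s \<partial>lborel) \<partial>lborel) = (\<integral>y. (\<integral>s. f y s \<partial>lborel) \<partial>lborel)"
    using lborel_pair.Fubini_integral[OF int] .
  moreover have "(\<integral>y. f y s \<partial>lborel) = u s * stepf e a e b s" for s
  proof -
    have "(\<integral>y. f y s \<partial>lborel) = u s * (\<integral>y. rho ((s - y) / e) / e * indicator {a..b} y \<partial>lborel)"
      unfolding f_def by (simp add: mult.assoc)
    then show ?thesis by (simp only: FTC_rho[OF e ab, of s])
  qed
  moreover have "(\<integral>s. f y s \<partial>lborel) = moll u e y * indicator {a..b} y" for y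
    unfolding f_def moll_def by simp
  ultimately show ?thesis by simp
qed

definition Csob :: real where "Csob = (Mrho + 1)^2"

lemma sq_bound_aux:
  fixes v L M :: real
  assumes M: "M > 0" and L: "L \<ge> 0" and h: "\<And>t. t > 0 \<Longrightarrow> t^2 \<ge> L \<Longrightarrow> \<bar>v\<bar> \<le> M * t"
  shows "v^2 \<le> M^2 * L"
proof (cases "L > 0")
  case True
  have "\<bar>v\<bar> \<le> M * sqrt L" using h[of "sqrt L"] True by simp
  then have "\<bar>v\<bar>^2 \<le> (M * sqrt L)^2" by (rule power_mono) simp
  then show ?thesis using True by (simp add: power_mult_distrib)
next
  case False
  then have L0: "L = 0" using L by simp
  show ?thesis
  proof (rule ccontr)
    assume "\<not> ?thesis"
    then have v: "\<bar>v\<bar> > 0" using L0 by auto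
    have "\<bar>v\<bar> \<le> M * (\<bar>v\<bar> / (2 * M))" using h[of "\<bar>v\<bar> / (2 * M)"] v M L0 by simp
    then show False using v M by (simp add: field_simps)
  qed
qed

lemma sobolev_ae:
  assumes u: "L2 u" and u1: "L2 u1" and wd: "weak_deriv_of u1 u"
  shows "AE x in lborel. (u x)^2 \<le> Csob * ((\<integral>s. (u s)^2 \<partial>lborel) + (\<integral>s. (u1 s)^2 \<partial>lborel))"
proof -
  have [measurable]: "u \<in> borel_measurable lborel" using L2_meas[OF u] .
  define U where "U = (\<integral>s. (u s)^2 \<partial>lborel)"
  define U1 where "U1 = (\<integral>s. (u1 s)^2 \<partial>lborel)"
  have U0: "U \<ge> 0" "U1 \<ge> 0" unfolding U_def U1_def by (auto intro!: integral_nonneg_AE)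
  define B where "B = (\<lambda>t. Mrho * ((t + U / t) / 2) + (t + U1 / t) / 2)"
  define v where "v = (\<lambda>y. lim (\<lambda>n. moll u (en n) y))"
  have vlim: "(\<lambda>n. moll u (en n) y) \<longlonglongrightarrow> v y" for y
    unfolding v_def using moll_conv[OF u u1 wd] convergent_LIMSEQ_iff by blast
  have vB: "\<bar>v y\<bar> \<le> B t" if t: "t > 0" for y t
  proof (rule LIMSEQ_le_const2[OF tendsto_rabs[OF vlim]])
    show "\<exists>N. \<forall>n\<ge>N. \<bar>moll u (en n) y\<bar> \<le> B t"
      using moll_unif[OF u u1 wd en_pos en_le1 t] unfolding B_def U_def U1_def by blast
  qed
  have vm[measurable]: "v \<in> borel_measurable lborel"
    by (rule borel_measurable_LIMSEQ_real[OF vlim moll_meas[OF u]])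
  have vi: "integrable lborel (\<lambda>s. v s * indicator {a..b} s)" for a b
  proof (rule Bochner_Integration.integrable_bound)
    show "integrable lborel (\<lambda>s. B 1 * indicator {a..b} s)"
      using integrable_ind_Icc by (rule Bochner_Integration.integrable_mult_right)
    show "(\<lambda>s. v s * indicator {a..b} s) \<in> borel_measurable lborel" by measurable
    show "AE s in lborel. norm (v s * indicator {a..b} s) \<le> norm (B 1 * indicator {a..b} s)"
    proof (rule AE_I2)
      fix s
      have "\<bar>v s\<bar> \<le> \<bar>B 1\<bar>" using vB[of 1 s] by simp
      then show "norm (v s * indicator {a..b} s) \<le> norm (B 1 * indicator {a..b} s)"
        by (auto split: split_indicator)
    qed
  qed
  have ident: "(\<integral>s. v s * indicator {a..b} s \<partial>lborel) = (\<integral>s. u s * (indicator {a<..} s - indicator {b<..} s) \<partial>lborel)"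
    if ab: "a \<le> b" for a b
  proof -
    have l1: "(\<lambda>n. \<integral>y. moll u (en n) y * indicator {a..b} y \<partial>lborel) \<longlonglongrightarrow> (\<integral>y. v y * indicator {a..b} y \<partial>lborel)"
    proof (rule integral_dominated_convergence)
      show "(\<lambda>y. v y * indicator {a..b} y) \<in> borel_measurable lborel" by measurable
      show "\<And>i. (\<lambda>y. moll u (en i) y * indicator {a..b} y) \<in> borel_measurable lborel"
        using moll_meas[OF u] by measurable
      show "integrable lborel (\<lambda>y. B 1 * indicator {a..b} y)"
        using integrable_ind_Icc by (rule Bochner_Integration.integrable_mult_right)
      show "AE y in lborel. (\<lambda>i. moll u (en i) y * indicator {a..b} y) \<longlonglongrightarrow> v y * indicator {a..b} y"
        by (intro AE_I2 tendsto_mult tendsto_const vlim)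
      fix i
      show "AE y in lborel. norm (moll u (en i) y * indicator {a..b} y) \<le> B 1 * indicator {a..b} y"
      proof (rule AE_I2)
        fix y
        have "\<bar>moll u (en i) y\<bar> \<le> B 1"
          using moll_unif[OF u u1 wd en_pos en_le1, of 1 i y] unfolding B_def U_def U1_def by simp
        then show "norm (moll u (en i) y * indicator {a..b} y) \<le> B 1 * indicator {a..b} y"
          by (auto split: split_indicator)
      qed
    qed
    have l2: "(\<lambda>n. \<integral>s. u s * stepf (en n) a (en n) b s \<partial>lborel) \<longlonglongrightarrow> (\<integral>s. u s * (indicator {a<..} s - indicator {b<..} s) \<partial>lborel)"
    proof (rule integral_dominated_convergence)
      show "(\<lambda>s. u s * (indicator {a<..} s - indicator {b<..} s)) \<in> borel_measurable lborel" by measurable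
      show "\<And>i. (\<lambda>s. u s * stepf (en i) a (en i) b s) \<in> borel_measurable lborel" by measurable
      show "integrable lborel (\<lambda>s. \<bar>u s\<bar> * indicator {a..b+1} s)" using int_abs_ind[OF u] .
      show "AE s in lborel. (\<lambda>i. u s * stepf (en i) a (en i) b s) \<longlonglongrightarrow> u s * (indicator {a<..} s - indicator {b<..} s)"
        by (intro AE_I2 tendsto_mult tendsto_const stepf_lim)
      fix i
      show "AE s in lborel. norm (u s * stepf (en i) a (en i) b s) \<le> \<bar>u s\<bar> * indicator {a..b+1} s"
      proof (rule AE_I2)
        fix s
        have "\<bar>stepf (en i) a (en i) b s\<bar> \<le> 1 * indicator {min a b .. max (a + en i) (b + en i)} s"
          using stepf_supp[OF en_pos en_pos] .
        also have "\<dots> \<le> indicator {a..b+1} s"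
          using en_le1[of i] ab by (auto split: split_indicator)
        finally show "norm (u s * stepf (en i) a (en i) b s) \<le> \<bar>u s\<bar> * indicator {a..b+1} s"
          by (simp add: abs_mult mult_left_mono)
      qed
    qed
    have "(\<lambda>n. \<integral>y. moll u (en n) y * indicator {a..b} y \<partial>lborel) = (\<lambda>n. \<integral>s. u s * stepf (en n) a (en n) b s \<partial>lborel)"
      using moll_int_Icc[OF u en_pos ab] by simp
    with l1 have "(\<lambda>n. \<integral>s. u s * stepf (en n) a (en n) b s \<partial>lborel) \<longlonglongrightarrow> (\<integral>y. v y * indicator {a..b} y \<partial>lborel)"
      by simp
    from LIMSEQ_unique[OF this l2] show ?thesis .
  qed
  have aeuv: "AE s in lborel. u s - v s = 0"
  proof (rule FL)
    fix a b :: real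
    show "integrable lborel (\<lambda>s. (u s - v s) * indicator {a..b} s)"
      using int_L2_bdd[OF u, of "indicator {a..b}" 1 a b] vi[of a b]
      by (simp add: left_diff_distrib)
    assume ab: "a \<le> b"
    have "(\<integral>s. (u s - v s) * indicator {a..b} s \<partial>lborel) = (\<integral>s. u s * indicator {a..b} s \<partial>lborel) - (\<integral>s. v s * indicator {a..b} s \<partial>lborel)"
      using int_L2_bdd[OF u, of "indicator {a..b}" 1 a b] vi[of a b]
      by (simp add: left_diff_distrib)
    also have "(\<integral>s. u s * indicator {a..b} s \<partial>lborel) = (\<integral>s. u s * (indicator {a<..} s - indicator {b<..} s) \<partial>lborel)"
    proof (rule integral_cong_AE)
      show "(\<lambda>s. u s * indicator {a..b} s) \<in> borel_measurable lborel" by measurable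
      show "(\<lambda>s. u s * (indicator {a<..} s - indicator {b<..} s)) \<in> borel_measurable lborel" by measurable
      show "AE s in lborel. u s * indicator {a..b} s = u s * (indicator {a<..} s - indicator {b<..} s)"
        using AE_lborel_singleton[of a] by eventually_elim (use ab in \<open>auto split: split_indicator\<close>)
    qed
    finally show "(\<integral>s. (u s - v s) * indicator {a..b} s \<partial>lborel) = 0" using ident[OF ab] by simp
  qed
  have vb: "(v y)^2 \<le> Csob * (U + U1)" for y
    unfolding Csob_def
  proof (rule sq_bound_aux)
    show "Mrho + 1 > 0" using Mrho(1) by simp
    show "U + U1 \<ge> 0" using U0 by simp
    fix t :: real assume t: "t > 0" "t^2 \<ge> U + U1"
    have "U / t \<le> t" "U1 / t \<le> t" using t U0 by (auto simp: field_simps power2_eq_square)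
    then have a1: "(t + U / t) / 2 \<le> t" "(t + U1 / t) / 2 \<le> t" by auto
    have "Mrho * ((t + U / t) / 2) \<le> Mrho * t" using a1(1) Mrho(1) by (intro mult_left_mono) auto
    then have "B t \<le> Mrho * t + t" unfolding B_def using a1(2) by linarith
    then show "\<bar>v y\<bar> \<le> (Mrho + 1) * t" using vB[OF t(1), of y] by (simp add: algebra_simps)
  qed
  from aeuv show ?thesis
  proof eventually_elim
    case (elim x)
    then have "u x = v x" by simp
    then show ?case using vb[of x] unfolding U_def U1_def by simp
  qed
qed


lemma lin_expand:
  fixes L :: "real^'n \<Rightarrow> 'b::real_vector"
  assumes "linear L"
  shows "L h = (\<Sum>i\<in>UNIV. h$i *\<^sub>R L (axis i 1))"
proof -
  have "L h = L (\<Sum>i\<in>UNIV. h$i *\<^sub>R axis i 1)"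
    using basis_expansion[of h] by (simp add: scalar_mult_eq_scaleR)
  also have "\<dots> = (\<Sum>i\<in>UNIV. h$i *\<^sub>R L (axis i 1))"
    by (simp add: real_vector.linear_sum[OF assms] linear_cmul[OF assms])
  finally show ?thesis .
qed

lemma grad_has_deriv:
  fixes F :: "real^4 \<Rightarrow> real"
  assumes "F differentiable (at w)"
  shows "(F has_derivative (\<lambda>h. grad F w \<bullet> h)) (at w)"
proof -
  have d: "(F has_derivative frechet_derivative F (at w)) (at w)"
    using assms frechet_derivative_works by blast
  have lin: "linear (frechet_derivative F (at w))" using has_derivative_linear[OF d] .
  have "frechet_derivative F (at w) = (\<lambda>h. grad F w \<bullet> h)"
  proof
    fix h
    show "frechet_derivative F (at w) h = grad F w \<bullet> h"
      using lin_expand[OF lin, of h] by (simp add: grad_def inner_vec_def mult.commute)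
  qed
  with d show ?thesis by simp
qed

lemma hess_has_deriv:
  fixes F :: "real^4 \<Rightarrow> real"
  assumes "grad F differentiable (at w)"
  shows "(grad F has_derivative (\<lambda>h. hess F w *v h)) (at w)"
proof -
  have d: "(grad F has_derivative frechet_derivative (grad F) (at w)) (at w)"
    using assms frechet_derivative_works by blast
  have lin: "linear (frechet_derivative (grad F) (at w))" using has_derivative_linear[OF d] .
  have "frechet_derivative (grad F) (at w) = (\<lambda>h. hess F w *v h)"
  proof
    fix h
    show "frechet_derivative (grad F) (at w) h = hess F w *v h"
      using lin_expand[OF lin, of h]
      by (simp add: vec_eq_iff hess_def matrix_vector_mult_def sum_component mult.commute)
  qed
  with d show ?thesis by simp
qed

context
  fixes F :: "real^4 \<Rightarrow> real"
  assumes C2: "C2_R4 F"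
begin

lemma F_deriv: "(F has_derivative (\<lambda>h. grad F w \<bullet> h)) (at w)"
  using C2 grad_has_deriv unfolding C2_R4_def by blast

lemma gradF_deriv: "(grad F has_derivative (\<lambda>h. hess F w *v h)) (at w)"
  using C2 hess_has_deriv unfolding C2_R4_def by blast

definition DG :: "real^4 \<Rightarrow> real^4 \<Rightarrow> real" where
  "DG w h = h \<bullet> grad F w + w \<bullet> (hess F w *v h)"

lemma G_deriv: "(Gfun F has_derivative DG w) (at w)"
proof -
  have "((\<lambda>x. x \<bullet> grad F x) has_derivative (\<lambda>h. w \<bullet> (hess F w *v h) + h \<bullet> grad F w)) (at w)"
    by (rule has_derivative_inner[OF has_derivative_ident gradF_deriv])
  moreover have "(\<lambda>h. w \<bullet> (hess F w *v h) + h \<bullet> grad F w) = DG w"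
    by (rule ext) (simp add: DG_def)
  ultimately show ?thesis by (simp add: Gfun_def[abs_def])
qed

lemma DG_linear: "linear (DG w)"
  using has_derivative_linear[OF G_deriv] .

lemma gradG_inner: "v \<bullet> grad (Gfun F) w = DG w v"
proof -
  have "Gfun F differentiable (at w)" using G_deriv by (auto simp: differentiable_def)
  then have "(Gfun F has_derivative (\<lambda>h. grad (Gfun F) w \<bullet> h)) (at w)" by (rule grad_has_deriv)
  then have "(\<lambda>h. grad (Gfun F) w \<bullet> h) = DG w" using G_deriv has_derivative_unique by blast
  then show ?thesis by (metis inner_commute)
qed

lemma ray_F: "((\<lambda>t. F (t *\<^sub>R w)) has_real_derivative (grad F (t *\<^sub>R w) \<bullet> w)) (at t)"
proof -
  have d1: "((\<lambda>t. t *\<^sub>R w) has_derivative (\<lambda>s. s *\<^sub>R w)) (at t)"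
    by (auto intro!: derivative_eq_intros)
  have "((\<lambda>t. F (t *\<^sub>R w)) has_derivative (\<lambda>s. grad F (t *\<^sub>R w) \<bullet> (s *\<^sub>R w))) (at t)"
    using has_derivative_compose[OF d1 F_deriv] .
  moreover have "(\<lambda>s. grad F (t *\<^sub>R w) \<bullet> (s *\<^sub>R w)) = (*) (grad F (t *\<^sub>R w) \<bullet> w)"
    by (rule ext) (simp add: mult.commute)
  ultimately show ?thesis by (simp add: has_field_derivative_def)
qed

lemma ray_G: "((\<lambda>t. Gfun F (t *\<^sub>R w)) has_real_derivative (DG (t *\<^sub>R w) w)) (at t)"
proof -
  have "((\<lambda>t. Gfun F (t *\<^sub>R w)) has_derivative (\<lambda>s. DG (t *\<^sub>R w) (s *\<^sub>R w))) (at t)"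
    by (rule has_derivative_compose[OF _ G_deriv, of "\<lambda>t. t *\<^sub>R w" "\<lambda>s. s *\<^sub>R w", simplified])
       (auto intro!: derivative_eq_intros)
  moreover have "(\<lambda>s. DG (t *\<^sub>R w) (s *\<^sub>R w)) = (*) (DG (t *\<^sub>R w) w)"
    by (rule ext) (simp add: linear_cmul[OF DG_linear] mult.commute)
  ultimately show ?thesis by (simp add: has_field_derivative_def)
qed

lemma G_zero: "Gfun F 0 = 0"
  by (simp add: Gfun_def)

lemma ray_ineq:
  assumes F0: "F 0 = 0" and p: "p > 0"
    and ca: "\<forall>w. w \<bullet> grad (Gfun F) w \<ge> (p + 2) * Gfun F w"
  shows "(p + 2) * F w \<le> Gfun F w"
proof -
  define k where "k = (\<lambda>t. (p + 2) * F (t *\<^sub>R w) - Gfun F (t *\<^sub>R w))"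
  define k' where "k' = (\<lambda>t. (p + 2) * (grad F (t *\<^sub>R w) \<bullet> w) - DG (t *\<^sub>R w) w)"
  have kd: "(k has_real_derivative k' t) (at t)" for t
    unfolding k_def k'_def by (intro DERIV_diff DERIV_cmult ray_F ray_G)
  obtain z where z: "0 < z" "z < 1" "k 1 - k 0 = (1 - 0) * k' z"
    using MVT2[of 0 1 k k'] kd by auto
  have "z * k' z \<le> 0"
  proof -
    have "z * k' z = (p + 2) * (grad F (z *\<^sub>R w) \<bullet> (z *\<^sub>R w)) - DG (z *\<^sub>R w) (z *\<^sub>R w)"
      by (simp add: k'_def linear_cmul[OF DG_linear] algebra_simps)
    also have "\<dots> = (p + 2) * Gfun F (z *\<^sub>R w) - (z *\<^sub>R w) \<bullet> grad (Gfun F) (z *\<^sub>R w)"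
      by (simp add: gradG_inner Gfun_def inner_commute)
    also have "\<dots> \<le> 0" using ca[rule_format, of "z *\<^sub>R w"] by (simp add: algebra_simps)
    finally show ?thesis .
  qed
  then have "k' z \<le> 0" using z(1) by (simp add: mult_le_0_iff)
  then have "k 1 \<le> k 0" using z(3) by simp
  then show ?thesis by (simp add: k_def F0 G_zero)
qed

lemma grad0:
  assumes F0: "F 0 = 0" and p: "p > 0"
    and ca: "\<forall>w. w \<bullet> grad (Gfun F) w \<ge> (p + 2) * Gfun F w"
  shows "grad F 0 = 0"
proof -
  define g where "g = grad F 0"
  have "((\<lambda>s. F (s *\<^sub>R g)) has_real_derivative (grad F (0 *\<^sub>R g) \<bullet> g)) (at 0)" by (rule ray_F)
  then have "((\<lambda>s. (F (s *\<^sub>R g) - F (0 *\<^sub>R g)) / (s - 0)) \<longlongrightarrow> g \<bullet> g) (at 0)"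
    by (simp add: has_field_derivative_iff g_def)
  then have l1: "((\<lambda>s. F (s *\<^sub>R g) / s) \<longlongrightarrow> g \<bullet> g) (at 0)" using F0 by simp
  have "isCont (grad F) (0 *\<^sub>R g)"
    using gradF_deriv has_derivative_continuous by blast
  then have "isCont (\<lambda>s. grad F (s *\<^sub>R g)) 0"
    by (intro continuous_at_compose[of 0 "\<lambda>s. s *\<^sub>R g" "grad F", unfolded o_def]) (auto intro!: continuous_intros)
  then have "((\<lambda>s. grad F (s *\<^sub>R g)) \<longlongrightarrow> grad F (0 *\<^sub>R g)) (at 0)" by (simp add: isCont_def)
  then have l2: "((\<lambda>s. g \<bullet> grad F (s *\<^sub>R g)) \<longlongrightarrow> g \<bullet> g) (at 0)"
    by (auto intro!: tendsto_inner simp: g_def)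
  have ev: "eventually (\<lambda>s. (p + 2) * (F (s *\<^sub>R g) / s) \<le> g \<bullet> grad F (s *\<^sub>R g)) (at_right 0)"
    using eventually_at_right_less[of "0::real"]
  proof eventually_elim
    case (elim s)
    have "(p + 2) * F (s *\<^sub>R g) \<le> Gfun F (s *\<^sub>R g)" by (rule ray_ineq[OF F0 p ca])
    also have "\<dots> = s * (g \<bullet> grad F (s *\<^sub>R g))" by (simp add: Gfun_def)
    finally show ?case using elim by (simp add: field_simps)
  qed
  have "(p + 2) * (g \<bullet> g) \<le> g \<bullet> g"
    by (rule tendsto_le[OF trivial_limit_at_right_real
          filterlim_at_split[THEN iffD1, OF l2, THEN conjunct2]
          tendsto_mult[OF tendsto_const filterlim_at_split[THEN iffD1, OF l1, THEN conjunct2]] ev])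
  then have "(p + 1) * (g \<bullet> g) \<le> 0" by (simp add: algebra_simps)
  then have "g \<bullet> g \<le> 0" using p by (auto simp: mult_le_0_iff)
  then have "g \<bullet> g = 0" using inner_ge_zero[of g] by linarith
  then show ?thesis by (simp add: g_def)
qed

lemma onorm_hess: "onorm (\<lambda>h. hess F x *v h) \<le> 16 * norm (hess F x)"
proof -
  have "onorm ((*v) (hess F x)) \<le> (\<Sum>i\<in>UNIV. \<Sum>j\<in>UNIV. \<bar>hess F x $ i $ j\<bar>)"
    by (rule onorm_le_matrix_component_sum)
  also have "\<dots> \<le> (\<Sum>i\<in>(UNIV::4 set). \<Sum>j\<in>(UNIV::4 set). norm (hess F x))"
  proof (intro sum_mono)
    fix i j
    have "\<bar>hess F x $ i $ j\<bar> \<le> norm (hess F x $ i)" by (rule component_le_norm_cart)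
    also have "\<dots> \<le> norm (hess F x)" by (rule Finite_Cartesian_Product.norm_nth_le)
    finally show "\<bar>hess F x $ i $ j\<bar> \<le> norm (hess F x)" .
  qed
  also have "\<dots> = 16 * norm (hess F x)" by simp
  finally show ?thesis by simp
qed

lemma G_bound:
  assumes g0: "grad F 0 = 0" and q: "q1 > 0" "q2 > 0" and C: "C > 0"
    and cb: "\<forall>w. norm (hess F w) \<le> C * (norm w powr q1 + norm w powr q2)"
  shows "\<bar>Gfun F w\<bar> \<le> 16 * C * (norm w powr q1 + norm w powr q2) * (norm w)^2"
proof -
  define B where "B = 16 * C * (norm w powr q1 + norm w powr q2)"
  have "norm (grad F w - grad F 0) \<le> B * norm (w - 0)"
  proof (rule differentiable_bound[of "closed_segment 0 w" "grad F" "\<lambda>x h. hess F x *v h"])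
    show "convex (closed_segment 0 w)" by simp
    show "\<And>x. x \<in> closed_segment 0 w \<Longrightarrow> (grad F has_derivative (\<lambda>h. hess F x *v h)) (at x within closed_segment 0 w)"
      by (rule has_derivative_subset[OF gradF_deriv]) simp
    fix x assume x: "x \<in> closed_segment 0 w"
    have nx: "norm x \<le> norm w" using segment_bound(1)[OF x] by (simp only: diff_zero)
    have "onorm (\<lambda>h. hess F x *v h) \<le> 16 * norm (hess F x)" by (rule onorm_hess)
    also have "\<dots> \<le> 16 * (C * (norm x powr q1 + norm x powr q2))" using cb[rule_format, of x] by linarith
    also have "\<dots> \<le> 16 * (C * (norm w powr q1 + norm w powr q2))"
      using nx q C by (intro mult_left_mono add_mono powr_mono2) auto
    finally show "onorm (\<lambda>h. hess F x *v h) \<le> B" unfolding B_def by (simp only: mult.assoc)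
  next
    show "w \<in> closed_segment 0 w" by (rule ends_in_segment)
  next
    show "0 \<in> closed_segment 0 w" by (rule ends_in_segment)
  qed
  then have ng: "norm (grad F w) \<le> B * norm w" using g0 by simp
  have "\<bar>Gfun F w\<bar> \<le> norm w * norm (grad F w)" unfolding Gfun_def by (rule Cauchy_Schwarz_ineq2)
  also have "\<dots> \<le> norm w * (B * norm w)" using ng by (rule mult_left_mono) simp
  also have "\<dots> = B * (norm w)^2" by (simp add: power2_eq_square)
  finally show ?thesis unfolding B_def .
qed

end


lemma vec4_norm2: "(norm (vec4 p q r s))^2 = p^2 + q^2 + r^2 + s^2"
proof -
  have c: "vec4 p q r s $ 1 = p" "vec4 p q r s $ 2 = q" "vec4 p q r s $ 3 = r" "vec4 p q r s $ 4 = s"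
    by (simp_all add: vec4_def vector_def)
  have "(norm (vec4 p q r s))^2 = vec4 p q r s \<bullet> vec4 p q r s" by (rule power2_norm_eq_inner)
  also have "\<dots> = p^2 + q^2 + r^2 + s^2" by (simp add: inner_vec_def sum_4 c power2_eq_square)
  finally show ?thesis .
qed

lemma H2_props:
  assumes "H2 u"
  shows "L2 u" "L2 (wd1 u)" "L2 (wd2 u)" "weak_deriv_of (wd1 u) u" "weak_deriv_of (wd2 u) (wd1 u)"
proof -
  obtain u1 u2 where h: "L2 u1" "L2 u2" "weak_deriv_of u1 u" "weak_deriv_of u2 u1"
    using assms unfolding H2_def by blast
  have "\<exists>u1. L2 u1 \<and> weak_deriv_of u1 u \<and> (\<exists>u2. L2 u2 \<and> weak_deriv_of u2 u1)" using h by blast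
  then have w1: "L2 (wd1 u) \<and> weak_deriv_of (wd1 u) u \<and> (\<exists>u2. L2 u2 \<and> weak_deriv_of u2 (wd1 u))"
    unfolding wd1_def by (rule someI_ex)
  then have "\<exists>u2. L2 u2 \<and> weak_deriv_of u2 (wd1 u)" by blast
  then have w2: "L2 (wd2 u) \<and> weak_deriv_of (wd2 u) (wd1 u)"
    unfolding wd2_def by (rule someI_ex)
  show "L2 u" using assms by (simp add: H2_def)
  show "L2 (wd1 u)" "weak_deriv_of (wd1 u) u" using w1 by auto
  show "L2 (wd2 u)" "weak_deriv_of (wd2 u) (wd1 u)" using w2 by auto
qed

lemma cross_bound:
  fixes \<omega> b X Y :: real
  assumes "b \<ge> 0"
  shows "2 * \<omega> * (b * X * Y) \<le> \<bar>\<omega>\<bar> * b * (X^2 + Y^2)"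
proof -
  have "2 * \<bar>X * Y\<bar> \<le> X^2 + Y^2"
    using sum_squares_bound[of "\<bar>X\<bar>" "\<bar>Y\<bar>"] by (simp add: abs_mult power2_eq_square)
  then have "\<bar>\<omega>\<bar> * b * (2 * \<bar>X * Y\<bar>) \<le> \<bar>\<omega>\<bar> * b * (X^2 + Y^2)"
    using assms by (intro mult_left_mono) auto
  moreover have "2 * \<omega> * (b * X * Y) \<le> \<bar>2 * \<omega> * (b * X * Y)\<bar>" by simp
  moreover have "\<bar>2 * \<omega> * (b * X * Y)\<bar> = \<bar>\<omega>\<bar> * b * (2 * \<bar>X * Y\<bar>)"
    using assms by (simp add: abs_mult)
  ultimately show ?thesis by linarith
qed

lemma pointwise_coercive:
  fixes a c a2 c2 b b2 \<omega> P P1 P2 V V1 V2 \<delta> :: real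
  assumes "b > 0" "b2 > 0"
    and d: "\<delta> \<le> 1 - \<bar>\<omega>\<bar>" "\<delta> \<le> - c - \<bar>\<omega>\<bar> * b" "\<delta> \<le> - a - \<bar>\<omega>\<bar> * b"
           "\<delta> \<le> c2 - \<bar>\<omega>\<bar> * b2" "\<delta> \<le> a2 - \<bar>\<omega>\<bar> * b2"
  shows "\<delta> * (P^2 + P1^2 + P2^2 + V^2 + V1^2 + V2^2)
     \<le> (P^2 - c * P1^2 + c2 * P2^2 + V^2 - a * V1^2 + a2 * V2^2)
        - 2 * \<omega> * (P * V + b * P1 * V1 + b2 * P2 * V2)"
proof -
  have e1: "2 * \<omega> * (1 * P * V) \<le> \<bar>\<omega>\<bar> * 1 * (P^2 + V^2)" by (rule cross_bound) simp
  have e2: "2 * \<omega> * (b * P1 * V1) \<le> \<bar>\<omega>\<bar> * b * (P1^2 + V1^2)" by (rule cross_bound) (use assms in simp)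
  have e3: "2 * \<omega> * (b2 * P2 * V2) \<le> \<bar>\<omega>\<bar> * b2 * (P2^2 + V2^2)" by (rule cross_bound) (use assms in simp)
  have m1: "\<delta> * P^2 \<le> (1 - \<bar>\<omega>\<bar>) * P^2" "\<delta> * V^2 \<le> (1 - \<bar>\<omega>\<bar>) * V^2"
    using d by (auto intro: mult_right_mono)
  have m2: "\<delta> * P1^2 \<le> (- c - \<bar>\<omega>\<bar> * b) * P1^2" "\<delta> * V1^2 \<le> (- a - \<bar>\<omega>\<bar> * b) * V1^2"
    using d by (auto intro: mult_right_mono)
  have m3: "\<delta> * P2^2 \<le> (c2 - \<bar>\<omega>\<bar> * b2) * P2^2" "\<delta> * V2^2 \<le> (a2 - \<bar>\<omega>\<bar> * b2) * V2^2"
    using d by (auto intro: mult_right_mono)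
  have "2 * \<omega> * (P * V + b * P1 * V1 + b2 * P2 * V2) =
        2 * \<omega> * (1 * P * V) + 2 * \<omega> * (b * P1 * V1) + 2 * \<omega> * (b2 * P2 * V2)"
    by (simp add: algebra_simps)
  then show ?thesis using e1 e2 e3 m1 m2 m3 by (simp add: algebra_simps)
qed

definition S6 :: "(real \<Rightarrow> real) \<Rightarrow> (real \<Rightarrow> real) \<Rightarrow> real \<Rightarrow> real" where
  "S6 \<psi> v x = (\<psi> x)^2 + (wd1 \<psi> x)^2 + (wd2 \<psi> x)^2 + (v x)^2 + (wd1 v x)^2 + (wd2 v x)^2"

definition Lam :: "(real \<Rightarrow> real) \<Rightarrow> (real \<Rightarrow> real) \<Rightarrow> real" where
  "Lam \<psi> v = (\<integral>x. S6 \<psi> v x \<partial>lborel)"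

lemma S6_int: "H2 \<psi> \<Longrightarrow> H2 v \<Longrightarrow> integrable lborel (S6 \<psi> v)"
  unfolding S6_def[abs_def]
  by (intro Bochner_Integration.integrable_add L2_sq H2_props)

lemma S6_nonneg: "S6 \<psi> v x \<ge> 0"
  by (simp add: S6_def)

lemma Lam_split: "H2 \<psi> \<Longrightarrow> H2 v \<Longrightarrow> Lam \<psi> v =
   (\<integral>x. (\<psi> x)^2 \<partial>lborel) + (\<integral>x. (wd1 \<psi> x)^2 \<partial>lborel) + (\<integral>x. (wd2 \<psi> x)^2 \<partial>lborel)
   + (\<integral>x. (v x)^2 \<partial>lborel) + (\<integral>x. (wd1 v x)^2 \<partial>lborel) + (\<integral>x. (wd2 v x)^2 \<partial>lborel)"
  unfolding Lam_def S6_def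
  by (simp add: Bochner_Integration.integral_add Bochner_Integration.integrable_add L2_sq H2_props)

lemma Iom_integral:
  assumes "H2 \<psi>" "H2 v"
  shows "Iom a a2 c c2 b b2 \<omega> \<psi> v = (\<integral>x. ((\<psi> x)^2 - c * (wd1 \<psi> x)^2 + c2 * (wd2 \<psi> x)^2
                         + (v x)^2 - a * (wd1 v x)^2 + a2 * (wd2 v x)^2)
       - 2 * \<omega> * (\<psi> x * v x + b * wd1 \<psi> x * wd1 v x + b2 * wd2 \<psi> x * wd2 v x) \<partial>lborel)"
proof -
  note h = H2_props[OF assms(1)] H2_props[OF assms(2)]
  have i1: "integrable lborel (\<lambda>x. (\<psi> x)^2 - c * (wd1 \<psi> x)^2 + c2 * (wd2 \<psi> x)^2
                         + (v x)^2 - a * (wd1 v x)^2 + a2 * (wd2 v x)^2)"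
    using h by (intro Bochner_Integration.integrable_add Bochner_Integration.integrable_diff
        Bochner_Integration.integrable_mult_right L2_sq)
  have i2: "integrable lborel (\<lambda>x. \<psi> x * v x + b * wd1 \<psi> x * wd1 v x + b2 * wd2 \<psi> x * wd2 v x)"
    using h int_L2_mult by (simp add: mult.assoc)
  show ?thesis
    unfolding Iom_def I1_def I2_def
    using i1 i2 by (simp add: Bochner_Integration.integral_diff)
qed

lemma Iom_ge:
  assumes "H2 \<psi>" "H2 v" "b > 0" "b2 > 0"
    and d: "\<delta> \<le> 1 - \<bar>\<omega>\<bar>" "\<delta> \<le> - c - \<bar>\<omega>\<bar> * b" "\<delta> \<le> - a - \<bar>\<omega>\<bar> * b"
           "\<delta> \<le> c2 - \<bar>\<omega>\<bar> * b2" "\<delta> \<le> a2 - \<bar>\<omega>\<bar> * b2"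
  shows "\<delta> * Lam \<psi> v \<le> Iom a a2 c c2 b b2 \<omega> \<psi> v"
proof -
  note h = H2_props[OF assms(1)] H2_props[OF assms(2)]
  have i1: "integrable lborel (\<lambda>x. (\<psi> x)^2 - c * (wd1 \<psi> x)^2 + c2 * (wd2 \<psi> x)^2
                         + (v x)^2 - a * (wd1 v x)^2 + a2 * (wd2 v x)^2)"
    using h by (intro Bochner_Integration.integrable_add Bochner_Integration.integrable_diff
        Bochner_Integration.integrable_mult_right L2_sq)
  have i2: "integrable lborel (\<lambda>x. \<psi> x * v x + b * wd1 \<psi> x * wd1 v x + b2 * wd2 \<psi> x * wd2 v x)"
    using h int_L2_mult by (simp add: mult.assoc)
  have "\<delta> * Lam \<psi> v = (\<integral>x. \<delta> * S6 \<psi> v x \<partial>lborel)" by (simp add: Lam_def)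
  also have "\<dots> \<le> (\<integral>x. ((\<psi> x)^2 - c * (wd1 \<psi> x)^2 + c2 * (wd2 \<psi> x)^2
                         + (v x)^2 - a * (wd1 v x)^2 + a2 * (wd2 v x)^2)
       - 2 * \<omega> * (\<psi> x * v x + b * wd1 \<psi> x * wd1 v x + b2 * wd2 \<psi> x * wd2 v x) \<partial>lborel)"
  proof (rule integral_mono)
    show "integrable lborel (\<lambda>x. \<delta> * S6 \<psi> v x)" using S6_int[OF assms(1,2)] by simp
    show "integrable lborel (\<lambda>x. ((\<psi> x)^2 - c * (wd1 \<psi> x)^2 + c2 * (wd2 \<psi> x)^2
                         + (v x)^2 - a * (wd1 v x)^2 + a2 * (wd2 v x)^2)
       - 2 * \<omega> * (\<psi> x * v x + b * wd1 \<psi> x * wd1 v x + b2 * wd2 \<psi> x * wd2 v x))"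
      using i1 i2 by (intro Bochner_Integration.integrable_diff Bochner_Integration.integrable_mult_right)
    fix x
    show "\<delta> * S6 \<psi> v x \<le> ((\<psi> x)^2 - c * (wd1 \<psi> x)^2 + c2 * (wd2 \<psi> x)^2
                         + (v x)^2 - a * (wd1 v x)^2 + a2 * (wd2 v x)^2)
       - 2 * \<omega> * (\<psi> x * v x + b * wd1 \<psi> x * wd1 v x + b2 * wd2 \<psi> x * wd2 v x)"
      unfolding S6_def by (rule pointwise_coercive[OF assms(3,4) d])
  qed
  also have "\<dots> = Iom a a2 c c2 b b2 \<omega> \<psi> v" using Iom_integral[OF assms(1,2)] by simp
  finally show ?thesis .
qed

lemma Lam_pos:
  assumes "H2 \<psi>" "H2 v" "\<not> (AE x in lborel. \<psi> x = 0 \<and> v x = 0)"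
  shows "Lam \<psi> v > 0"
proof -
  have i: "integrable lborel (S6 \<psi> v)" using S6_int[OF assms(1,2)] .
  have nn: "Lam \<psi> v \<ge> 0" unfolding Lam_def by (rule integral_nonneg_AE) (simp add: S6_nonneg)
  have "Lam \<psi> v \<noteq> 0"
  proof
    assume "Lam \<psi> v = 0"
    then have "AE x in lborel. S6 \<psi> v x = 0"
      using integral_nonneg_eq_0_iff_AE[OF i] S6_nonneg unfolding Lam_def by auto
    then have "AE x in lborel. \<psi> x = 0 \<and> v x = 0"
    proof eventually_elim
      case (elim x)
      have z: "(\<psi> x)^2 + (wd1 \<psi> x)^2 + (wd2 \<psi> x)^2 + (v x)^2 + (wd1 v x)^2 + (wd2 v x)^2 = 0"
        using elim by (simp add: S6_def)
      have "(\<psi> x)^2 = 0" "(v x)^2 = 0"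
        using z by (smt (verit) zero_le_power2)+
      then show ?case by simp
    qed
    with assms(3) show False by simp
  qed
  with nn show ?thesis by simp
qed

lemma Csob_nonneg: "Csob \<ge> 0"
  by (simp add: Csob_def)

lemma sob_w:
  assumes "H2 \<psi>" "H2 v"
  shows "AE x in lborel. (norm (vec4 (\<psi> x) (wd1 \<psi> x) (v x) (wd1 v x)))^2 \<le> 2 * Csob * Lam \<psi> v"
proof -
  note h = H2_props[OF assms(1)] H2_props[OF assms(2)]
  define A0 where "A0 = (\<integral>x. (\<psi> x)^2 \<partial>lborel)"
  define A1 where "A1 = (\<integral>x. (wd1 \<psi> x)^2 \<partial>lborel)"
  define A2 where "A2 = (\<integral>x. (wd2 \<psi> x)^2 \<partial>lborel)"
  define B0 where "B0 = (\<integral>x. (v x)^2 \<partial>lborel)"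
  define B1 where "B1 = (\<integral>x. (wd1 v x)^2 \<partial>lborel)"
  define B2 where "B2 = (\<integral>x. (wd2 v x)^2 \<partial>lborel)"
  have nn: "A0 \<ge> 0" "A1 \<ge> 0" "A2 \<ge> 0" "B0 \<ge> 0" "B1 \<ge> 0" "B2 \<ge> 0"
    unfolding A0_def A1_def A2_def B0_def B1_def B2_def by (auto intro!: integral_nonneg_AE)
  have L: "Lam \<psi> v = A0 + A1 + A2 + B0 + B1 + B2"
    unfolding A0_def A1_def A2_def B0_def B1_def B2_def using Lam_split[OF assms] .
  have s1: "AE x in lborel. (\<psi> x)^2 \<le> Csob * (A0 + A1)"
    unfolding A0_def A1_def by (rule sobolev_ae) (use h in auto)
  have s2: "AE x in lborel. (wd1 \<psi> x)^2 \<le> Csob * (A1 + A2)"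
    unfolding A1_def A2_def by (rule sobolev_ae) (use h in auto)
  have s3: "AE x in lborel. (v x)^2 \<le> Csob * (B0 + B1)"
    unfolding B0_def B1_def by (rule sobolev_ae) (use h in auto)
  have s4: "AE x in lborel. (wd1 v x)^2 \<le> Csob * (B1 + B2)"
    unfolding B1_def B2_def by (rule sobolev_ae) (use h in auto)
  have key: "Csob * (A0 + A1) + Csob * (A1 + A2) + Csob * (B0 + B1) + Csob * (B1 + B2) \<le> 2 * Csob * Lam \<psi> v"
  proof -
    have "A0 + A1 + (A1 + A2) + (B0 + B1) + (B1 + B2) \<le> 2 * Lam \<psi> v" using nn L by simp
    then have "Csob * (A0 + A1 + (A1 + A2) + (B0 + B1) + (B1 + B2)) \<le> Csob * (2 * Lam \<psi> v)"
      using Csob_nonneg by (rule mult_left_mono)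
    then show ?thesis by (simp add: algebra_simps)
  qed
  from s1 s2 s3 s4 show ?thesis
  proof eventually_elim
    case (elim x)
    then show ?case using key by (simp add: vec4_norm2)
  qed
qed

lemma elem_bounds:
  fixes F :: "real^4 \<Rightarrow> real"
  assumes H: "H2 \<psi>" "H2 v" and nz: "\<not> (AE x in lborel. \<psi> x = 0 \<and> v x = 0)"
    and P0: "Pom a a2 c c2 b b2 F \<omega> \<psi> v = 0"
    and bb: "b > 0" "b2 > 0"
    and dpos: "\<delta> > 0"
    and d: "\<delta> \<le> 1 - \<bar>\<omega>\<bar>" "\<delta> \<le> - c - \<bar>\<omega>\<bar> * b" "\<delta> \<le> - a - \<bar>\<omega>\<bar> * b"
           "\<delta> \<le> c2 - \<bar>\<omega>\<bar> * b2" "\<delta> \<le> a2 - \<bar>\<omega>\<bar> * b2"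
    and C2: "C2_R4 F" and F0: "F 0 = 0" and p: "p > 0"
    and ca: "\<forall>w. w \<bullet> grad (Gfun F) w \<ge> (p + 2) * Gfun F w"
    and q: "0 < q1" "q1 \<le> q2" and C: "C > 0"
    and cb: "\<forall>w. norm (hess F w) \<le> C * (norm w powr q1 + norm w powr q2)"
  shows "\<delta> * (min 1 ((\<delta> / (32 * C)) powr (1 / q1)))^2 / (2 * Csob + 1) \<le> Iom a a2 c c2 b b2 \<omega> \<psi> v"
    and "p / (2 * (p + 2)) * Iom a a2 c c2 b b2 \<omega> \<psi> v \<le> Jom a a2 c c2 b b2 F \<omega> \<psi> v"
proof -
  define I where "I = Iom a a2 c c2 b b2 \<omega> \<psi> v"
  define N where "N = Nfun F \<psi> v"
  define \<Lambda> where "\<Lambda> = Lam \<psi> v"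
  define w where "w = (\<lambda>x. vec4 (\<psi> x) (wd1 \<psi> x) (v x) (wd1 v x))"
  define K' where "K' = 2 * Csob + 1"
  define m where "m = min 1 ((\<delta> / (32 * C)) powr (1 / q1))"
  have K'pos: "K' > 0" using Csob_nonneg by (simp add: K'_def)
  have IN: "I = N" using P0 by (simp add: Pom_def I_def N_def)
  have Lpos: "\<Lambda> > 0" unfolding \<Lambda>_def by (rule Lam_pos[OF H nz])
  have IL: "\<delta> * \<Lambda> \<le> I" unfolding \<Lambda>_def I_def by (rule Iom_ge[OF H bb d])
  have Ipos: "I > 0" using IL Lpos dpos by (smt (verit) mult_pos_pos)
  have g0: "grad F 0 = 0" by (rule grad0[OF C2 F0 p ca])
  define s where "s = sqrt (K' * \<Lambda>)"
  have s0: "s \<ge> 0" unfolding s_def by (intro real_sqrt_ge_zero mult_nonneg_nonneg) (use K'pos Lpos in auto)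
  define M0 where "M0 = 16 * C * (s powr q1 + s powr q2)"
  have aeG: "AE x in lborel. Gfun F (w x) \<le> M0 * S6 \<psi> v x"
    using sob_w[OF H]
  proof eventually_elim
    case (elim x)
    define n where "n = norm (w x)"
    have n0: "n \<ge> 0" by (simp add: n_def)
    have "n^2 \<le> K' * \<Lambda>" using elim Lpos Csob_nonneg unfolding n_def w_def K'_def \<Lambda>_def
      by (smt (verit, best) mult_right_mono)
    then have ns: "n \<le> s" unfolding s_def using n0 real_le_rsqrt by blast
    have "\<bar>Gfun F (w x)\<bar> \<le> 16 * C * (n powr q1 + n powr q2) * n^2"
      unfolding n_def by (rule G_bound[OF C2 g0]) (use q C cb in auto)
    also have "\<dots> \<le> M0 * S6 \<psi> v x"
    proof -
      have "n powr q1 \<le> s powr q1" "n powr q2 \<le> s powr q2"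
        using ns n0 q by (auto intro!: powr_mono2)
      then have a1: "16 * C * (n powr q1 + n powr q2) \<le> M0" unfolding M0_def using C by simp
      have a2: "n^2 \<le> S6 \<psi> v x"
        unfolding n_def w_def vec4_norm2 S6_def by simp
      have M0n: "M0 \<ge> 0" unfolding M0_def using C by simp
      show ?thesis using mult_mono[OF a1 a2 M0n] by simp
    qed
    finally show ?case by simp
  qed
  have Gint: "integrable lborel (\<lambda>x. Gfun F (w x))"
  proof (rule ccontr)
    assume "\<not> ?thesis"
    then have "N = 0" unfolding N_def Nfun_def w_def by (simp add: not_integrable_integral_eq)
    with IN Ipos show False by simp
  qed
  have NM: "N \<le> M0 * \<Lambda>"
  proof -
    have "N = (\<integral>x. Gfun F (w x) \<partial>lborel)" by (simp add: N_def Nfun_def w_def)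
    also have "\<dots> \<le> (\<integral>x. M0 * S6 \<psi> v x \<partial>lborel)"
      by (rule integral_mono_AE[OF Gint _ aeG]) (use S6_int[OF H] in simp)
    also have "\<dots> = M0 * \<Lambda>" by (simp add: \<Lambda>_def Lam_def)
    finally show ?thesis .
  qed
  have dM: "\<delta> \<le> M0"
  proof -
    have "\<delta> * \<Lambda> \<le> M0 * \<Lambda>" using IL IN NM by simp
    then show ?thesis using Lpos by simp
  qed
  have ms: "m \<le> s"
  proof (cases "s \<ge> 1")
    case True then show ?thesis by (simp add: m_def)
  next
    case False
    have "s powr q2 \<le> s powr q1" using False s0 q by (intro powr_mono') auto
    then have "16 * C * (s powr q1 + s powr q2) \<le> 16 * C * (s powr q1 + s powr q1)"
      using C by (intro mult_left_mono add_left_mono) auto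
    then have "\<delta> \<le> 32 * C * s powr q1" using dM unfolding M0_def by simp
    then have h1: "\<delta> / (32 * C) \<le> s powr q1" using C by (simp add: field_simps)
    have "(\<delta> / (32 * C)) powr (1 / q1) \<le> (s powr q1) powr (1 / q1)"
      using h1 dpos C q by (intro powr_mono2) auto
    also have "\<dots> = s" using q s0 by (simp add: powr_powr)
    finally show ?thesis by (simp add: m_def)
  qed
  have m0: "m \<ge> 0" unfolding m_def by simp
  have "m^2 \<le> s^2" using ms m0 by (rule power_mono)
  also have "s^2 = K' * \<Lambda>" unfolding s_def using K'pos Lpos by simp
  finally have mL: "m^2 / K' \<le> \<Lambda>" using K'pos by (simp add: field_simps)
  have "\<delta> * (m^2 / K') \<le> \<delta> * \<Lambda>" using mL dpos by (intro mult_left_mono) auto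
  then show "\<delta> * (min 1 ((\<delta> / (32 * C)) powr (1 / q1)))^2 / (2 * Csob + 1) \<le> Iom a a2 c c2 b b2 \<omega> \<psi> v"
    using IL unfolding m_def K'_def I_def by simp
  have KI: "Kfun F \<psi> v \<le> I / (p + 2)"
  proof (cases "integrable lborel (\<lambda>x. F (w x))")
    case True
    have "Kfun F \<psi> v = (\<integral>x. F (w x) \<partial>lborel)" by (simp add: Kfun_def w_def)
    also have "\<dots> \<le> (\<integral>x. Gfun F (w x) / (p + 2) \<partial>lborel)"
    proof (rule integral_mono[OF True])
      show "integrable lborel (\<lambda>x. Gfun F (w x) / (p + 2))" using Gint by simp
      fix x
      have "(p + 2) * F (w x) \<le> Gfun F (w x)" by (rule ray_ineq[OF C2 F0 p ca])
      then show "F (w x) \<le> Gfun F (w x) / (p + 2)" using p by (simp add: field_simps)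
    qed
    also have "\<dots> = N / (p + 2)" by (simp add: N_def Nfun_def w_def)
    finally show ?thesis using IN by simp
  next
    case False
    then have "Kfun F \<psi> v = 0" by (simp add: Kfun_def w_def not_integrable_integral_eq)
    then show ?thesis using Ipos p by simp
  qed
  have "p / (2 * (p + 2)) * I = I / 2 - I / (p + 2)" using p by (simp add: field_simps)
  also have "\<dots> \<le> I / 2 - Kfun F \<psi> v" using KI by simp
  also have "\<dots> = Jom a a2 c c2 b b2 F \<omega> \<psi> v" by (simp add: Jom_def I_def)
  finally show "p / (2 * (p + 2)) * Iom a a2 c c2 b b2 \<omega> \<psi> v \<le> Jom a a2 c c2 b b2 F \<omega> \<psi> v"
    by (simp add: I_def)
qed

theorem lemma2p6:
  fixes a c a2 c2 b b2 \<omega> :: real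
    and F :: "real^4 \<Rightarrow> real"
    and \<psi>s vs :: "nat \<Rightarrow> real \<Rightarrow> real"
  assumes "a < 0" "c < 0" "a2 > 0" "c2 > 0" "b > 0" "b2 > 0"
    and "0 < \<bar>\<omega>\<bar>" "\<bar>\<omega>\<bar> < 1" "\<bar>\<omega>\<bar> < - a / b" "\<bar>\<omega>\<bar> < - c / b"
        "\<bar>\<omega>\<bar> < a2 / b2" "\<bar>\<omega>\<bar> < c2 / b2"
    and "C2_R4 F" "F 0 = 0"
    and cond_a: "\<exists>p>0. \<forall>w. w \<bullet> grad (Gfun F) w \<ge> (p + 2) * Gfun F w"
    and cond_b: "\<exists>q1 q2 C. 0 < q1 \<and> q1 \<le> q2 \<and> C > 0 \<and>
                   (\<forall>w. norm (hess F w) \<le> C * (norm w powr q1 + norm w powr q2))"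
    and cond_c: "\<exists>u v. H2 u \<and> H2 v \<and> Kfun F u v > 0"
    and minseq: "\<And>n. (\<psi>s n, vs n) \<in> Mnz a a2 c c2 b b2 F \<omega>"
    and conv: "(\<lambda>n. Jom a a2 c c2 b b2 F \<omega> (\<psi>s n) (vs n)) \<longlonglongrightarrow> Sval a a2 c c2 b b2 F \<omega>"
  shows "bounded (range (\<lambda>n. Iom a a2 c c2 b b2 \<omega> (\<psi>s n) (vs n)))
         \<and> (\<exists>L>0. \<exists>r. strict_mono r \<and>
              (\<lambda>n. Iom a a2 c c2 b b2 \<omega> (\<psi>s (r n)) (vs (r n))) \<longlonglongrightarrow> L)"
proof -
  obtain p where p: "p > 0" and ca: "\<forall>w. w \<bullet> grad (Gfun F) w \<ge> (p + 2) * Gfun F w"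
    using cond_a by blast
  obtain q1 q2 C where q: "0 < q1" "q1 \<le> q2" and C: "C > 0"
    and cb: "\<forall>w. norm (hess F w) \<le> C * (norm w powr q1 + norm w powr q2)"
    using cond_b by blast
  define \<delta> where "\<delta> = min (min (min (min (1 - \<bar>\<omega>\<bar>) (- c - \<bar>\<omega>\<bar> * b)) (- a - \<bar>\<omega>\<bar> * b))
                        (c2 - \<bar>\<omega>\<bar> * b2)) (a2 - \<bar>\<omega>\<bar> * b2)"
  have d: "\<delta> \<le> 1 - \<bar>\<omega>\<bar>" "\<delta> \<le> - c - \<bar>\<omega>\<bar> * b" "\<delta> \<le> - a - \<bar>\<omega>\<bar> * b"
           "\<delta> \<le> c2 - \<bar>\<omega>\<bar> * b2" "\<delta> \<le> a2 - \<bar>\<omega>\<bar> * b2"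
    unfolding \<delta>_def by (meson min.cobounded1 min.cobounded2 order_trans)+
  have pos1: "\<bar>\<omega>\<bar> * b < - c" using mult_strict_right_mono[OF assms(10) assms(5)] assms(5) by simp
  have pos2: "\<bar>\<omega>\<bar> * b < - a" using mult_strict_right_mono[OF assms(9) assms(5)] assms(5) by simp
  have pos3: "\<bar>\<omega>\<bar> * b2 < c2" using mult_strict_right_mono[OF assms(12) assms(6)] assms(6) by simp
  have pos4: "\<bar>\<omega>\<bar> * b2 < a2" using mult_strict_right_mono[OF assms(11) assms(6)] assms(6) by simp
  have dpos: "\<delta> > 0" unfolding \<delta>_def using pos1 pos2 pos3 pos4 assms(8) by auto
  define L0 where "L0 = \<delta> * (min 1 ((\<delta> / (32 * C)) powr (1 / q1)))^2 / (2 * Csob + 1)"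
  have L0pos: "L0 > 0"
  proof -
    have "\<delta> / (32 * C) > 0" using dpos C by simp
    then have "(\<delta> / (32 * C)) powr (1 / q1) > 0" using dpos C by simp
    then have mpos: "min 1 ((\<delta> / (32 * C)) powr (1 / q1)) > 0" by (metis min_def zero_less_one)
    have "(min 1 ((\<delta> / (32 * C)) powr (1 / q1)))^2 > 0" using mpos by (rule zero_less_power)
    moreover have "2 * Csob + 1 > 0" using Csob_nonneg by simp
    ultimately show ?thesis unfolding L0_def using dpos by (intro divide_pos_pos mult_pos_pos)
  qed
  define I where "I = (\<lambda>n. Iom a a2 c c2 b b2 \<omega> (\<psi>s n) (vs n))"
  define J where "J = (\<lambda>n. Jom a a2 c c2 b b2 F \<omega> (\<psi>s n) (vs n))"
  define cp where "cp = p / (2 * (p + 2))"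
  have cppos: "cp > 0" unfolding cp_def using p by simp
  have bnds: "L0 \<le> I n \<and> cp * I n \<le> J n" for n
  proof -
    have m: "H2 (\<psi>s n)" "H2 (vs n)" "Pom a a2 c c2 b b2 F \<omega> (\<psi>s n) (vs n) = 0"
       "\<not> (AE x in lborel. \<psi>s n x = 0 \<and> vs n x = 0)"
      using minseq[of n] by (auto simp: Mnz_def)
    show ?thesis
      unfolding L0_def I_def J_def cp_def
      using elem_bounds[OF m(1,2,4,3) assms(5,6) dpos d assms(13,14) p ca q C cb] by simp
  qed
  have "convergent J" using conv unfolding J_def by (auto simp: convergent_def)
  then have "Bseq J" by (rule convergent_imp_Bseq)
  then obtain Mj where Mj: "\<And>n. norm (J n) \<le> Mj" by (auto simp: Bseq_def)
  have Ib: "\<bar>I n\<bar> \<le> Mj / cp" for n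
  proof -
    have "cp * I n \<le> Mj" using bnds[of n] Mj[of n] by auto
    then have "I n \<le> Mj / cp" using cppos by (simp add: field_simps)
    moreover have "I n \<ge> 0" using bnds[of n] L0pos by linarith
    ultimately show ?thesis by simp
  qed
  have bI: "bounded (range I)"
    unfolding bounded_iff using Ib by auto
  obtain r where r: "strict_mono r" "monoseq (\<lambda>n. I (r n))" using seq_monosub by blast
  have "Bseq (\<lambda>n. I (r n))" using Ib by (intro BseqI'[of _ "Mj / cp"]) simp
  then have "convergent (\<lambda>n. I (r n))" using r(2) by (rule Bseq_monoseq_convergent)
  then obtain L where L: "(\<lambda>n. I (r n)) \<longlonglongrightarrow> L" by (auto simp: convergent_def)
  have "L0 \<le> L" by (rule LIMSEQ_le_const[OF L]) (use bnds in auto)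
  then have "L > 0" using L0pos by linarith
  with bI L r(1) show ?thesis unfolding I_def by blast
qed


end
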